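(* Let $C_1,C_2\subseteq\mathbb{F}_q^n$ be linear codes with $C_2\subseteq C_1^{\perp_e}$, and let $Q\subseteq\mathbb{C}^{q^n}$ be the stabilizer code defined by $C_1\times C_2\subseteq\mathbb F_q^{2n}$. Let $\emptyset\neq I\subsetneq J\subseteq\{1,\dots,n\}$. Then $Q$ is $(I,J)$-locally recoverable if and only if both \[\sigma_I\left[\pi_J\left(C_1^{\perp_e}\right)\right]=\sigma_I(C_2)\quad\text{and}\quad\sigma_I\left[\pi_J\left(C_2^{\perp_e}\right)\right]=\sigma_I(C_1)\] hold.
   Context: $q$ is a power of a prime $p$; $C^{\perp_e}$ is the Euclidean dual. For $D\subseteq\mathbb F_q^n$ and $R\subseteq\{1,\dots,n\}$: $\pi_R(D)=\{(c_j)_{j\in R}:\mathbf c\in D\}$, $\sigma_R(D)=\{(c_j)_{j\in R}:\mathbf c\in D,\ \mathrm{supp}(\mathbf c)\subseteq R\}$; the shortening at $I$ of a code with coordinates indexed by $J\supseteq I$ is defined likewise. $C_1\times C_2=\{(\mathbf a|\mathbf b):\mathbf a\in C_1,\mathbf b\in C_2\}$ is self-orthogonal for the symplectic form $(\mathbf a|\mathbf b)\cdot_s(\mathbf c|\mathbf d)=\mathbf a\cdot\mathbf d-\mathbf b\cdot\mathbf c$. With $\xi=e^{2\pi\iota/p}$, $X(a)|x\rangle=|x+a\rangle$, $Z(b)|x\rangle=\xi^{\mathrm{tr}_{q/p}(bx)}|x\rangle$ on $\mathbb C^q$, $E_{(\mathbf a,\mathbf b)}=\bigotimes_jX(a_j)Z(b_j)$,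 the stabilizer code defined by a self-orthogonal $D$ is the common eigenspace $\{v:Ev=\lambda(E)v\ \forall E\in S\}$, $S$ generated by scalars $\xi^\ell\mathcal I$ and $E_{\mathbf y}$, $\mathbf y\in D$, $\lambda$ a character with $\lambda(\xi\mathcal I)=\xi$. Let $\Gamma(\rho)=q^{-2}\sum_{a,b}X(a)Z(b)\rho(X(a)Z(b))^\dagger$ and $\Gamma^I$ apply $\Gamma$ to qudits in $I$, identity elsewhere. $Q$ is $(I,J)$-locally recoverable if there is a trace-preserving quantum operation $\mathcal R$ acting only on the qudits indexed by $J$ with $\mathcal R\circ\Gamma^I(|\varphi\rangle\langle\varphi|)=|\varphi\rangle\langle\varphi|$ for all $|\varphi\rangle\in Q$. *)

theory Defs
  imports Complex_Main
begin

text \<open>The field F_q is a type 'a of class {finite, field}; p = (semiring_char TYPE('a)), q = (card (UNIV :: 'a set)) = p^m.\<close>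

definition fld_ext_deg :: "'a::{finite,field} itself \<Rightarrow> nat" where
  "fld_ext_deg T = (THE m. (card (UNIV :: 'a set)) = (semiring_char TYPE('a)) ^ m)"

definition fld_trace :: "'a::{finite,field} \<Rightarrow> 'a" where
  "fld_trace x = (\<Sum>i<fld_ext_deg TYPE('a). x ^ ((semiring_char TYPE('a)) ^ i))"

definition fld_trace_nat :: "'a::{finite,field} \<Rightarrow> nat" where
  "fld_trace_nat x = (THE k. k < (semiring_char TYPE('a)) \<and> of_nat k = fld_trace x)"

definition xi :: "'a::{finite,field} itself \<Rightarrow> complex" where
  "xi T = exp (2 * complex_of_real pi * \<i> / of_nat (semiring_char TYPE('a)))"

section \<open>Linear codes indexed by a finite coordinate type 'n (coordinates {1..n})\<close>

definition linear_code :: "('n::finite \<Rightarrow> 'a::field) set \<Rightarrow> bool" where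
  "linear_code C \<longleftrightarrow> (\<lambda>_. 0) \<in> C \<and> (\<forall>x\<in>C. \<forall>y\<in>C. (\<lambda>j. x j + y j) \<in> C) \<and> (\<forall>c. \<forall>x\<in>C. (\<lambda>j. c * x j) \<in> C)"

definition edot :: "('n::finite \<Rightarrow> 'a::field) \<Rightarrow> ('n \<Rightarrow> 'a) \<Rightarrow> 'a" where
  "edot x y = (\<Sum>j\<in>UNIV. x j * y j)"

definition edual :: "('n::finite \<Rightarrow> 'a::field) set \<Rightarrow> ('n \<Rightarrow> 'a) set" where
  "edual C = {x. \<forall>c\<in>C. edot x c = 0}"

text \<open>A vector indexed by R is represented by a vector on all coordinates that is 0 outside R.\<close>
definition restr :: "'n set \<Rightarrow> ('n \<Rightarrow> 'a::zero) \<Rightarrow> ('n \<Rightarrow> 'a)" where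
  "restr R x = (\<lambda>j. if j \<in> R then x j else 0)"

definition supp :: "('n \<Rightarrow> 'a::zero) \<Rightarrow> 'n set" where
  "supp x = {j. x j \<noteq> 0}"

definition puncture :: "'n set \<Rightarrow> ('n \<Rightarrow> 'a::zero) set \<Rightarrow> ('n \<Rightarrow> 'a) set" where
  "puncture R D = {restr R c | c. c \<in> D}"

definition shorten :: "'n set \<Rightarrow> ('n \<Rightarrow> 'a::zero) set \<Rightarrow> ('n \<Rightarrow> 'a) set" where
  "shorten R D = {restr R c | c. c \<in> D \<and> supp c \<subseteq> R}"

section \<open>Operators on C^(q^n), with basis |x>, x :: 'n => 'a\<close>

type_synonym ('n, 'a) qop = "('n \<Rightarrow> 'a) \<Rightarrow> ('n \<Rightarrow> 'a) \<Rightarrow> complex"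
type_synonym ('n, 'a) qvec = "('n \<Rightarrow> 'a) \<Rightarrow> complex"

definition op_mult :: "('n::finite, 'a::finite) qop \<Rightarrow> ('n, 'a) qop \<Rightarrow> ('n, 'a) qop" where
  "op_mult A B = (\<lambda>x y. \<Sum>z\<in>UNIV. A x z * B z y)"

definition op_app :: "('n::finite, 'a::finite) qop \<Rightarrow> ('n, 'a) qvec \<Rightarrow> ('n, 'a) qvec" where
  "op_app A v = (\<lambda>x. \<Sum>z\<in>UNIV. A x z * v z)"

definition op_adj :: "('n, 'a) qop \<Rightarrow> ('n, 'a) qop" where
  "op_adj A = (\<lambda>x y. cnj (A y x))"

definition op_id :: "('n, 'a) qop" where
  "op_id = (\<lambda>x y. if x = y then 1 else 0)"

definition op_scal :: "complex \<Rightarrow> ('n, 'a) qop \<Rightarrow> ('n, 'a) qop" where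
  "op_scal c A = (\<lambda>x y. c * A x y)"

text \<open>Single-qudit X(a) Z(b) on C^q: X(a)Z(b)|v> = xi^tr(bv) |v+a>; matrix entry (u,v).\<close>
definition XZ1 :: "'a::{finite,field} \<Rightarrow> 'a \<Rightarrow> 'a \<Rightarrow> 'a \<Rightarrow> complex" where
  "XZ1 a b u v = (if u = v + a then xi TYPE('a) ^ fld_trace_nat (b * v) else 0)"

text \<open>E_(a,b) = tensor_j X(a_j) Z(b_j): entries are products of single-qudit entries.\<close>
definition Eop :: "('n::finite \<Rightarrow> 'a::{finite,field}) \<Rightarrow> ('n \<Rightarrow> 'a) \<Rightarrow> ('n, 'a) qop" where
  "Eop a b = (\<lambda>x y. \<Prod>j\<in>UNIV. XZ1 (a j) (b j) (x j) (y j))"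

inductive_set stab_group :: "(('n::finite \<Rightarrow> 'a::{finite,field}) \<times> ('n \<Rightarrow> 'a)) set \<Rightarrow> ('n, 'a) qop set"
  for D where
  scal: "op_scal (xi TYPE('a) ^ l) op_id \<in> stab_group D"
| gen: "(a, b) \<in> D \<Longrightarrow> Eop a b \<in> stab_group D"
| mult: "A \<in> stab_group D \<Longrightarrow> B \<in> stab_group D \<Longrightarrow> op_mult A B \<in> stab_group D"

definition stab_char :: "(('n::finite \<Rightarrow> 'a::{finite,field}) \<times> ('n \<Rightarrow> 'a)) set \<Rightarrow> (('n, 'a) qop \<Rightarrow> complex) \<Rightarrow> bool" where
  "stab_char D lam \<longleftrightarrow>
     (\<forall>A\<in>stab_group D. \<forall>B\<in>stab_group D. lam (op_mult A B) = lam A * lam B)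
     \<and> lam (op_scal (xi TYPE('a)) op_id) = xi TYPE('a)"

definition stab_code :: "(('n::finite \<Rightarrow> 'a::{finite,field}) \<times> ('n \<Rightarrow> 'a)) set \<Rightarrow> (('n, 'a) qop \<Rightarrow> complex) \<Rightarrow> ('n, 'a) qvec set" where
  "stab_code D lam = {v. \<forall>E\<in>stab_group D. op_app E v = (\<lambda>x. lam E * v x)}"

definition prod_code :: "('n \<Rightarrow> 'a) set \<Rightarrow> ('n \<Rightarrow> 'a) set \<Rightarrow> (('n \<Rightarrow> 'a) \<times> ('n \<Rightarrow> 'a)) set" where
  "prod_code C1 C2 = C1 \<times> C2"

definition ketbra :: "('n, 'a) qvec \<Rightarrow> ('n, 'a) qop" where
  "ketbra v = (\<lambda>x y. v x * cnj (v y))"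

text \<open>Gamma^I = tensor of Gamma on qudits of I, identity elsewhere; expanded:
  q^(-2|I|) sum over a,b supported in I of E_(a,b) rho E_(a,b)^dagger.\<close>
definition Gamma_I :: "'n set \<Rightarrow> ('n::finite, 'a::{finite,field}) qop \<Rightarrow> ('n, 'a) qop" where
  "Gamma_I I rho = (\<lambda>x y.
     (1 / of_nat (card (UNIV :: 'a set)) ^ 2) ^ card I *
     (\<Sum>(a, b)\<in>{(a, b). supp a \<subseteq> I \<and> supp b \<subseteq> I}.
        op_mult (op_mult (Eop a b) rho) (op_adj (Eop a b)) x y))"

text \<open>Operator acting only on the qudits in J: id on the complement tensored with B,
  where B acts on the J-subsystem (vectors restricted to J).\<close>
definition local_op :: "'n set \<Rightarrow> ('n, 'a::zero) qop \<Rightarrow> ('n, 'a) qop" where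
  "local_op J B = (\<lambda>x y. if (\<forall>i. i \<notin> J \<longrightarrow> x i = y i) then B (restr J x) (restr J y) else 0)"

text \<open>Trace-preserving quantum operation acting only on J, in operator-sum (Kraus) form:
  R(rho) = sum_k A_k rho A_k^dagger with sum_k A_k^dagger A_k = I, each A_k = id (x) B_k.\<close>
definition TP_op_on :: "'n set \<Rightarrow> (('n::finite, 'a::{finite,zero}) qop \<Rightarrow> ('n, 'a) qop) \<Rightarrow> bool" where
  "TP_op_on J R \<longleftrightarrow> (\<exists>(m::nat) (B :: nat \<Rightarrow> ('n, 'a) qop).
      (\<lambda>x y. \<Sum>k<m. op_mult (op_adj (local_op J (B k))) (local_op J (B k)) x y) = op_id
    \<and> (\<forall>rho. R rho = (\<lambda>x y. \<Sum>k<m. op_mult (op_mult (local_op J (B k)) rho)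
                                           (op_adj (local_op J (B k))) x y)))"

definition locally_recoverable :: "('n::finite, 'a::{finite,field}) qvec set \<Rightarrow> 'n set \<Rightarrow> 'n set \<Rightarrow> bool" where
  "locally_recoverable Q I J \<longleftrightarrow>
     (\<exists>R. TP_op_on J R \<and> (\<forall>\<phi>\<in>Q. R (Gamma_I I (ketbra \<phi>)) = ketbra \<phi>))"

end

theory Submission
  imports Defs "HOL-Number_Theory.Cong" "HOL-Computational_Algebra.Polynomial" "HOL-Library.Function_Algebras"
    "HOL-Library.Real_Mod" "HOL-Library.FuncSet" "HOL-Library.Product_Plus"
begin

lemma char_pos: "CHAR('a::{finite,field}) > 0"
  by (rule finite_imp_CHAR_pos) simp

lemma char_prime: "prime CHAR('a::{finite,field})"
  using prime_CHAR_semidom[OF char_pos] by simp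

lemma char_ge2: "CHAR('a::{finite,field}) \<ge> 2"
  using char_prime[where 'a='a] prime_ge_2_nat by blast

lemma power_card_same:
  fixes x :: "'a :: {finite,field}"
  shows "x ^ card (UNIV :: 'a set) = x"
proof (cases "x = 0")
  case False
  have "x * (\<Prod>y\<in>UNIV-{0}. x * y) = x * x ^ (card (UNIV :: 'a set) - 1) * \<Prod>(UNIV-{0})"
    by (simp add: prod.distrib mult_ac)
  also have "x * x ^ (card (UNIV :: 'a set) - 1) = x ^ Suc (card (UNIV :: 'a set) - 1)"
    by (subst power_Suc) auto
  also have "Suc (card (UNIV :: 'a set) - 1) = card (UNIV :: 'a set)"
    using finite_UNIV_card_ge_0[where ?'a = 'a] by simp
  also have "(\<Prod>y\<in>UNIV-{0}. x * y) = (\<Prod>y\<in>UNIV-{0}. y)"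
    by (rule prod.reindex_bij_witness[of _ "\<lambda>y. y / x" "\<lambda>y. x * y"]) (use False in auto)
  finally show ?thesis
    by simp
qed (use finite_UNIV_card_ge_0[where ?'a = 'a] in auto)

lemma of_nat_eq_iff_mod:
  "(of_nat x :: 'a::{finite,field}) = of_nat y \<longleftrightarrow> x mod CHAR('a) = y mod CHAR('a)"
  by (simp add: of_nat_eq_iff_cong_CHAR cong_def)

lemma of_nat_mod_char: "(of_nat (x mod CHAR('a)) :: 'a::{finite,field}) = of_nat x"
  by (simp add: of_nat_eq_iff_mod)

definition pfield :: "'a::{finite,field} set" where
  "pfield = of_nat ` {..<CHAR('a)}"

lemma inj_of_nat_char: "inj_on (of_nat :: nat \<Rightarrow> 'a::{finite,field}) {..<CHAR('a)}"
  by (auto simp: inj_on_def of_nat_eq_iff_mod)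

lemma card_pfield: "card (pfield :: 'a::{finite,field} set) = CHAR('a)"
  unfolding pfield_def using card_image[OF inj_of_nat_char] by simp

lemma of_nat_in_pfield: "(of_nat k :: 'a::{finite,field}) \<in> pfield"
proof -
  have "(of_nat k :: 'a) = of_nat (k mod CHAR('a))" by (simp add: of_nat_mod_char)
  moreover have "k mod CHAR('a) < CHAR('a)" using char_pos[where 'a='a] by simp
  ultimately show ?thesis unfolding pfield_def by blast
qed

lemma frob_of_nat: "(of_nat k :: 'a::{finite,field}) ^ CHAR('a) = of_nat k"
proof (induction k)
  case 0 then show ?case using char_pos[where 'a='a] by simp
next
  case (Suc k)
  have "(of_nat (Suc k) :: 'a) ^ CHAR('a) = (of_nat k + 1) ^ CHAR('a)" by (simp add: add.commute)
  also have "\<dots> = of_nat k ^ CHAR('a) + 1 ^ CHAR('a)"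
    by (rule freshmans_dream) (auto simp: char_prime)
  finally show ?case using Suc by (simp add: add.commute)
qed

lemma frob_fixed_iff: "((y :: 'a::{finite,field}) ^ CHAR('a) = y) \<longleftrightarrow> y \<in> pfield"
proof -
  let ?p = "CHAR('a)"
  define P :: "'a poly" where "P = monom 1 ?p + [:0,-1:]"
  have p2: "?p \<ge> 2" by (rule char_ge2)
  have degP: "degree P = ?p"
    unfolding P_def using p2 by (subst degree_add_eq_left) (auto simp: degree_monom_eq)
  have "P \<noteq> 0" using degP p2 by auto
  hence cb: "card {x. poly P x = 0} \<le> ?p" using card_poly_roots_bound degP by metis
  have roots: "{x. poly P x = 0} = {y. y ^ ?p = y}"
    by (auto simp: P_def poly_monom)
  have sub: "(pfield :: 'a set) \<subseteq> {y::'a. y ^ ?p = y}"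
    unfolding pfield_def using frob_of_nat[where 'a='a] by auto
  have "pfield = {y::'a. y ^ ?p = y}"
    by (rule card_subset_eq) (use sub cb roots card_pfield[where 'a='a] card_mono[OF _ sub] in auto)
  thus ?thesis by blast
qed

definition addsub :: "'a::{finite,field} set \<Rightarrow> bool" where
  "addsub H \<longleftrightarrow> 0 \<in> H \<and> (\<forall>x\<in>H. \<forall>y\<in>H. x + y \<in> H)"

lemma addsub_of_nat: "addsub H \<Longrightarrow> x \<in> H \<Longrightarrow> of_nat k * x \<in> H"
  by (induction k) (auto simp: addsub_def distrib_right)

lemma of_nat_char_minus1: "(of_nat (CHAR('a) - 1) :: 'a::{finite,field}) = -1"
proof -
  have "(of_nat (CHAR('a) - 1) :: 'a) + 1 = of_nat (CHAR('a) - 1 + 1)" by simp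
  also have "CHAR('a) - 1 + 1 = CHAR('a)" using char_pos[where 'a='a] by simp
  finally show ?thesis by (simp add: eq_neg_iff_add_eq_0)
qed

lemma of_nat_char_minus1': "(of_nat (CHAR('a) - Suc 0) :: 'a::{finite,field}) = -1"
  using of_nat_char_minus1 by simp

lemma addsub_minus: "addsub H \<Longrightarrow> x \<in> H \<Longrightarrow> -x \<in> (H :: 'a::{finite,field} set)"
  using addsub_of_nat[of H x "CHAR('a) - 1"] by (simp add: of_nat_char_minus1 of_nat_char_minus1')

lemma addsub_diff: "addsub H \<Longrightarrow> x \<in> H \<Longrightarrow> y \<in> H \<Longrightarrow> x - y \<in> (H :: 'a::{finite,field} set)"
  using addsub_minus[of H y] by (simp add: addsub_def del: minus_apply) (metis diff_conv_add_uminus)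

lemma pfield_mult_in: "addsub H \<Longrightarrow> x \<in> H \<Longrightarrow> c \<in> pfield \<Longrightarrow> c * x \<in> H"
  unfolding pfield_def using addsub_of_nat by blast

lemma pfield_inverse: "c \<in> pfield \<Longrightarrow> inverse c \<in> (pfield :: 'a::{finite,field} set)"
  using frob_fixed_iff by (metis power_inverse)

lemma pfield_diff: "c \<in> pfield \<Longrightarrow> d \<in> pfield \<Longrightarrow> c - d \<in> (pfield :: 'a::{finite,field} set)"
proof -
  assume "c \<in> pfield" "d \<in> pfield"
  then obtain i j where "c = of_nat i" "d = of_nat j" unfolding pfield_def by auto
  hence "c - d = of_nat i + of_nat (CHAR('a) - 1) * of_nat j" by (simp add: of_nat_char_minus1 of_nat_char_minus1')
  also have "\<dots> = of_nat (i + (CHAR('a) - 1) * j)" by simp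
  finally show ?thesis using of_nat_in_pfield by metis
qed

lemma addsub_card_power:
  fixes H :: "'a::{finite,field} set"
  assumes "addsub H"
  shows "\<exists>m. card (UNIV :: 'a set) = card H * CHAR('a) ^ m"
  using assms
proof (induction "card (UNIV - H)" arbitrary: H rule: less_induct)
  case less
  show ?case
  proof (cases "H = UNIV")
    case True then show ?thesis by (intro exI[of _ 0]) simp
  next
    case False
    then obtain h where h: "h \<notin> H" by auto
    let ?p = "CHAR('a)"
    define H' where "H' = (\<lambda>(x,i). x + of_nat i * h) ` (H \<times> {..<?p})"
    have p2: "?p \<ge> 2" by (rule char_ge2)
    have sub: "H \<subseteq> H'" unfolding H'_def using p2 by (force intro: image_eqI[of _ _ "(x, 0)" for x])
    have hH': "h \<in> H'" unfolding H'_def using p2 less.prems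
      by (force simp: addsub_def intro: image_eqI[of _ _ "(0, 1)"])
    have addH': "addsub H'"
      unfolding addsub_def
    proof safe
      show "0 \<in> H'" using sub less.prems by (auto simp: addsub_def)
    next
      fix u v assume "u \<in> H'" "v \<in> H'"
      then obtain x i y j where u: "u = x + of_nat i * h" "x \<in> H" "i < ?p"
        and v: "v = y + of_nat j * h" "y \<in> H" "j < ?p" unfolding H'_def by auto
      have "u + v = (x + y) + of_nat ((i + j) mod ?p) * h"
        using u v by (simp add: of_nat_mod_char algebra_simps)
      moreover have "x + y \<in> H" using u v less.prems by (auto simp: addsub_def)
      moreover have "(i + j) mod ?p < ?p" using p2 by simp
      ultimately show "u + v \<in> H'" unfolding H'_def by force
    qed
    have inj: "inj_on (\<lambda>(x,i). x + of_nat i * h) (H \<times> {..<?p})"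
    proof (rule inj_onI, clarify)
      fix x i y j assume xy: "x \<in> H" "i < ?p" "y \<in> H" "j < ?p"
        and eq: "x + of_nat i * h = y + (of_nat j :: 'a) * h"
      show "x = y \<and> i = j"
      proof (cases "i = j")
        case True then show ?thesis using eq by simp
      next
        case False
        let ?c = "(of_nat i - of_nat j :: 'a)"
        have c0: "?c \<noteq> 0" using False xy by (simp add: of_nat_eq_iff_mod)
        have cp: "?c \<in> pfield" using pfield_diff of_nat_in_pfield by blast
        have "?c * h = y - x" using eq by (simp add: algebra_simps)
        hence "h = inverse ?c * (y - x)" using c0 by (simp add: field_simps)
        moreover have "y - x \<in> H" using addsub_diff less.prems xy by blast
        ultimately have "h \<in> H" using pfield_mult_in[OF less.prems] pfield_inverse[OF cp] by simp
        with h show ?thesis by simp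
      qed
    qed
    have cardH': "card H' = card H * ?p"
      unfolding H'_def by (subst card_image[OF inj]) (simp add: card_cartesian_product)
    have "card (UNIV - H') < card (UNIV - H)"
      using sub hH' h by (intro psubset_card_mono) auto
    from less.hyps[OF this addH'] obtain m where "card (UNIV :: 'a set) = card H' * ?p ^ m" by blast
    thus ?thesis using cardH' by (intro exI[of _ "Suc m"]) (simp add: mult_ac)
  qed
qed

lemma card_prime_power: "\<exists>m. card (UNIV :: 'a::{finite,field} set) = CHAR('a) ^ m"
proof -
  have "addsub {0::'a}" by (simp add: addsub_def)
  from addsub_card_power[OF this] show ?thesis by simp
qed


abbreviation qq where "qq \<equiv> card (UNIV :: 'a::{finite,field} set)"

lemma ext_deg: "card (UNIV :: 'a::{finite,field} set) = CHAR('a) ^ fld_ext_deg TYPE('a)"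
proof -
  obtain m where m: "card (UNIV :: 'a set) = CHAR('a) ^ m" using card_prime_power by blast
  have "fld_ext_deg TYPE('a) = m"
    unfolding fld_ext_deg_def
  proof (rule the_equality)
    fix k assume "card (UNIV :: 'a set) = CHAR('a) ^ k"
    with m show "k = m" using char_ge2[where 'a='a] by (simp add: power_inject_exp)
  qed (rule m)
  with m show ?thesis by simp
qed

lemma ext_deg_pos: "fld_ext_deg TYPE('a::{finite,field}) > 0"
proof (rule ccontr)
  assume "\<not> ?thesis"
  hence "card (UNIV :: 'a set) = 1" using ext_deg[where 'a='a] by simp
  moreover have "card {0::'a, 1} \<le> card (UNIV :: 'a set)" by (rule card_mono) auto
  ultimately show False by simp
qed

lemma trace_add: "fld_trace (x + y :: 'a::{finite,field}) = fld_trace x + fld_trace y"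
  unfolding fld_trace_def
  by (simp add: freshmans_dream'[OF char_prime] sum.distrib)

lemma trace_frob: "fld_trace (x :: 'a::{finite,field}) ^ CHAR('a) = fld_trace x"
proof -
  let ?m = "fld_ext_deg TYPE('a)" and ?p = "CHAR('a)"
  define f where "f i = x ^ (?p ^ i)" for i
  have "fld_trace x ^ ?p = (\<Sum>i<?m. f i ^ ?p)"
    unfolding fld_trace_def f_def by (rule freshmans_dream_sum[OF char_prime]) simp
  also have "\<dots> = (\<Sum>i<?m. f (Suc i))" by (simp add: f_def power_mult[symmetric] mult.commute)
  also have "\<dots> = (\<Sum>i<?m. f i)"
  proof -
    have a: "(\<Sum>i<Suc ?m. f i) = f 0 + (\<Sum>i<?m. f (Suc i))" by (rule sum.lessThan_Suc_shift)
    have b: "(\<Sum>i<Suc ?m. f i) = (\<Sum>i<?m. f i) + f ?m" by (rule sum.lessThan_Suc)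
    have c: "f ?m = f 0" unfolding f_def using power_card_same[of x] ext_deg[where 'a='a] by simp
    from a b c show ?thesis by simp
  qed
  finally show ?thesis unfolding fld_trace_def f_def .
qed

lemma trace_pfield: "fld_trace (x :: 'a::{finite,field}) \<in> pfield"
  using trace_frob frob_fixed_iff by blast

lemma trn: "fld_trace_nat (x :: 'a::{finite,field}) < CHAR('a) \<and> of_nat (fld_trace_nat x) = fld_trace x"
proof -
  obtain k where k: "k < CHAR('a)" "of_nat k = fld_trace x"
    using trace_pfield[of x] unfolding pfield_def by auto
  show ?thesis unfolding fld_trace_nat_def
  proof (rule theI[of _ k])
    show "\<And>k'. k' < CHAR('a) \<and> (of_nat k' :: 'a) = fld_trace x \<Longrightarrow> k' = k"
      using k inj_of_nat_char[where 'a='a] by (auto simp: inj_on_def)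
  qed (use k in auto)
qed

lemma trn_add: "fld_trace_nat (x + y :: 'a::{finite,field}) = (fld_trace_nat x + fld_trace_nat y) mod CHAR('a)"
proof -
  have "(of_nat (fld_trace_nat (x+y)) :: 'a) = of_nat (fld_trace_nat x + fld_trace_nat y)"
    using trn[of "x+y"] trn[of x] trn[of y] trace_add[of x y] by simp
  hence "fld_trace_nat (x+y) mod CHAR('a) = (fld_trace_nat x + fld_trace_nat y) mod CHAR('a)"
    by (simp only: of_nat_eq_iff_mod)
  thus ?thesis using trn[of "x+y"] by simp
qed

lemma trn_0: "fld_trace_nat (0 :: 'a::{finite,field}) = 0"
proof -
  have "fld_trace (0::'a) = 0" unfolding fld_trace_def using char_pos[where 'a='a] by (simp add: power_0_left)
  hence "(of_nat (fld_trace_nat (0::'a)) :: 'a) = of_nat 0" using trn[of "0::'a"] by simp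
  hence "fld_trace_nat (0::'a) mod CHAR('a) = 0 mod CHAR('a)" by (simp only: of_nat_eq_iff_mod)
  thus ?thesis using trn[of "0::'a"] by simp
qed

lemma trace_poly_degree:
  assumes "n > 0"
  shows "degree (\<Sum>i<n. monom (1::'a::{finite,field}) (CHAR('a) ^ i)) = CHAR('a) ^ (n - 1)"
  using assms
proof (induction n)
  case 0 then show ?case by simp
next
  case (Suc n)
  show ?case
  proof (cases "n = 0")
    case True then show ?thesis by (simp add: degree_monom_eq)
  next
    case False
    have "CHAR('a) ^ (n - 1) < CHAR('a) ^ n"
      using char_ge2[where 'a='a] False by (intro power_strict_increasing) auto
    then show ?thesis using Suc False
      by (simp add: degree_add_eq_right degree_monom_eq)
  qed
qed

lemma trace_nonzero: "\<exists>x::'a::{finite,field}. fld_trace x \<noteq> 0"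
proof (rule ccontr)
  assume "\<not> ?thesis"
  hence all0: "\<forall>x::'a. fld_trace x = 0" by blast
  let ?m = "fld_ext_deg TYPE('a)" and ?p = "CHAR('a)"
  define T :: "'a poly" where "T = (\<Sum>i<?m. monom 1 (?p ^ i))"
  have dT: "degree T = ?p ^ (?m - 1)" unfolding T_def by (rule trace_poly_degree[OF ext_deg_pos])
  have pT: "poly T x = fld_trace x" for x unfolding T_def fld_trace_def by (simp add: poly_sum poly_monom)
  have "T \<noteq> 0" using dT char_ge2[where 'a='a] ext_deg_pos[where 'a='a]
    by (metis degree_0 less_numeral_extra(3) zero_less_power char_pos)
  hence "card {x. poly T x = 0} \<le> ?p ^ (?m - 1)" using card_poly_roots_bound dT by metis
  moreover have "{x. poly T x = 0} = UNIV" using pT all0 by auto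
  moreover have "?p ^ (?m - 1) < ?p ^ ?m"
    using char_ge2[where 'a='a] ext_deg_pos[where 'a='a] by (intro power_strict_increasing) auto
  ultimately show False using ext_deg[where 'a='a] by simp
qed

lemma xi_cis: "xi TYPE('a::{finite,field}) = cis (2 * pi / CHAR('a))"
  unfolding xi_def cis_conv_exp by (simp add: field_simps)

lemma xi_pow: "xi TYPE('a::{finite,field}) ^ k = cis (2 * pi * k / CHAR('a))"
  unfolding xi_cis DeMoivre by (simp add: field_simps)

lemma xi_pow_eq_1: "xi TYPE('a::{finite,field}) ^ k = 1 \<longleftrightarrow> CHAR('a) dvd k"
proof -
  have p0: "real CHAR('a) > 0" using char_pos[where 'a='a] by simp
  have "xi TYPE('a) ^ k = 1 \<longleftrightarrow> (\<exists>n::int. 2 * pi * k / CHAR('a) = of_int n * (2 * pi))"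
    unfolding xi_pow cis_eq_1_iff ..
  also have "\<dots> \<longleftrightarrow> (\<exists>n::int. real k = of_int n * CHAR('a))"
    using p0 by (auto simp: field_simps)
  also have "\<dots> \<longleftrightarrow> (\<exists>n::int. int k = n * int CHAR('a))"
    by (metis (mono_tags, opaque_lifting) of_int_eq_iff of_int_mult of_int_of_nat_eq of_nat_mult)
  also have "\<dots> \<longleftrightarrow> int CHAR('a) dvd int k" by (auto simp: dvd_def mult.commute)
  finally show ?thesis by simp
qed

lemma xi_pow_mod: "xi TYPE('a::{finite,field}) ^ (k mod CHAR('a)) = xi TYPE('a) ^ k"
proof -
  have x1: "xi TYPE('a) ^ CHAR('a) = 1" using xi_pow_eq_1[where 'a='a, of "CHAR('a)"] by simp
  have "xi TYPE('a) ^ k = xi TYPE('a) ^ (k mod CHAR('a) + CHAR('a) * (k div CHAR('a)))" by simp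
  also have "\<dots> = xi TYPE('a) ^ (k mod CHAR('a)) * (xi TYPE('a) ^ CHAR('a)) ^ (k div CHAR('a))"
    by (simp only: power_add power_mult)
  also have "\<dots> = xi TYPE('a) ^ (k mod CHAR('a))" using x1 by simp
  finally show ?thesis by simp
qed

lemma norm_xi_pow: "norm (xi TYPE('a::{finite,field}) ^ k) = 1"
  by (simp add: xi_pow)

definition psi :: "'a::{finite,field} \<Rightarrow> complex" where
  "psi x = xi TYPE('a) ^ fld_trace_nat x"

lemma psi_add: "psi (x + y) = psi x * psi (y::'a::{finite,field})"
  unfolding psi_def trn_add xi_pow_mod by (simp add: power_add)

lemma psi_0[simp]: "psi (0::'a::{finite,field}) = 1"
  unfolding psi_def trn_0 by simp

lemma norm_psi[simp]: "norm (psi (x::'a::{finite,field})) = 1"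
  unfolding psi_def by (rule norm_xi_pow)

lemma psi_nz[simp]: "psi (x::'a::{finite,field}) \<noteq> 0"
  using norm_psi[of x] by (metis norm_zero zero_neq_one)

lemma psi_minus: "psi (- x) = inverse (psi (x::'a::{finite,field}))"
  using psi_add[of x "-x"] by (simp add: field_simps)

lemma cnj_psi: "cnj (psi (x::'a::{finite,field})) = psi (- x)"
proof -
  have "cnj (psi x) * psi x = 1"
    using norm_psi[of x] by (metis complex_norm_square mult.commute of_real_1 power_one)
  thus ?thesis by (simp add: psi_minus field_simps)
qed

lemma psi_diff: "psi (x - y) = psi x * cnj (psi (y::'a::{finite,field}))"
  using psi_add[of x "-y"] by (simp add: cnj_psi)

lemma psi_nontriv: "\<exists>x::'a::{finite,field}. psi x \<noteq> 1"
proof -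
  obtain x :: 'a where x: "fld_trace x \<noteq> 0" using trace_nonzero by blast
  have "fld_trace_nat x \<noteq> 0" using trn[of x] x by (metis of_nat_0)
  moreover have "fld_trace_nat x < CHAR('a)" using trn[of x] by simp
  ultimately have "\<not> CHAR('a) dvd fld_trace_nat x" by (meson dvd_imp_le not_le neq0_conv)
  thus ?thesis unfolding psi_def using xi_pow_eq_1 by blast
qed

lemma psi_scale_nontriv: "(c::'a::{finite,field}) \<noteq> 0 \<Longrightarrow> \<exists>t. psi (c * t) \<noteq> 1"
  using psi_nontriv[where 'a='a] by (metis mult.commute nonzero_divide_eq_eq)

lemma psi_xi: "\<exists>l. psi (x::'a::{finite,field}) = xi TYPE('a) ^ l"
  unfolding psi_def by blast


type_synonym ('n,'a) vec = "'n \<Rightarrow> 'a"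

definition smul :: "'a::field \<Rightarrow> ('n \<Rightarrow> 'a) \<Rightarrow> ('n \<Rightarrow> 'a)" where
  "smul c x = (\<lambda>j. c * x j)"

lemma lc_0: "linear_code C \<Longrightarrow> 0 \<in> C"
  by (simp add: linear_code_def zero_fun_def)

lemma lc_add: "linear_code C \<Longrightarrow> x \<in> C \<Longrightarrow> y \<in> C \<Longrightarrow> x + y \<in> C"
  by (simp add: linear_code_def plus_fun_def)

lemma lc_smul: "linear_code C \<Longrightarrow> x \<in> C \<Longrightarrow> smul c x \<in> C"
  by (simp add: linear_code_def smul_def)

lemma lc_minus: "linear_code C \<Longrightarrow> x \<in> C \<Longrightarrow> - x \<in> (C :: ('n::finite \<Rightarrow> 'a::field) set)"
proof -
  assume "linear_code C" "x \<in> C"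
  then have "smul (-1) x \<in> C" by (rule lc_smul)
  moreover have "smul (-1) x = - x" by (simp add: smul_def fun_eq_iff)
  ultimately show ?thesis by simp
qed

lemma lc_diff: "linear_code C \<Longrightarrow> x \<in> C \<Longrightarrow> y \<in> C \<Longrightarrow> x - y \<in> (C :: ('n::finite \<Rightarrow> 'a::field) set)"
  using lc_add[of C x "-y"] lc_minus[of C y] by simp

lemma edot_comm: "edot x y = edot y x"
  unfolding edot_def by (simp add: mult.commute)

lemma edot_add_left: "edot (x + y) z = edot x z + edot y z"
  unfolding edot_def by (simp add: distrib_right sum.distrib)

lemma edot_add_right: "edot z (x + y) = edot z x + edot z y"
  unfolding edot_def by (simp add: distrib_left sum.distrib)

lemma edot_minus_left: "edot (- x) z = - edot x z"
  unfolding edot_def by (simp add: sum_negf)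

lemma edot_minus_right: "edot z (- x) = - edot z x"
  unfolding edot_def by (simp add: sum_negf)

lemma edot_diff_left: "edot (x - y) z = edot x z - edot y z"
  unfolding edot_def by (simp add: left_diff_distrib sum_subtractf)

lemma edot_diff_right: "edot z (x - y) = edot z x - edot z y"
  unfolding edot_def by (simp add: right_diff_distrib sum_subtractf)

lemma edot_smul_left: "edot (smul c x) z = c * edot x z"
  unfolding edot_def smul_def by (simp add: sum_distrib_left mult_ac)

lemma edot_smul_right: "edot z (smul c x) = c * edot z x"
  unfolding edot_def smul_def by (simp add: sum_distrib_left mult_ac)

lemma edot_zero_left[simp]: "edot 0 z = 0"
  unfolding edot_def by simp

lemma edot_zero_right[simp]: "edot z 0 = 0"
  unfolding edot_def by simp

lemma lc_edual: "linear_code (edual C)"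
  unfolding linear_code_def edual_def
  by (auto simp: edot_def distrib_right sum.distrib sum_distrib_left[symmetric] mult.assoc)

lemma sub_edual_edual: "C \<subseteq> edual (edual C)"
  unfolding edual_def by (auto simp: edot_comm)

lemma edual_mono: "A \<subseteq> B \<Longrightarrow> edual B \<subseteq> edual A"
  unfolding edual_def by auto

definition VS :: "'n set \<Rightarrow> ('n \<Rightarrow> 'a::zero) set" where
  "VS J = {v. \<forall>j. j \<notin> J \<longrightarrow> v j = 0}"

lemma VS_supp: "v \<in> VS J \<longleftrightarrow> supp v \<subseteq> J"
  unfolding VS_def supp_def by auto

lemma lc_VS: "linear_code (VS J :: ('n::finite \<Rightarrow> 'a::field) set)"
  unfolding linear_code_def VS_def by auto

lemma VS_UNIV[simp]: "VS UNIV = UNIV"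
  unfolding VS_def by auto

lemma card_VS:
  "card (VS J :: ('n::finite \<Rightarrow> 'a::{finite,field}) set) = card (UNIV :: 'a set) ^ card J"
proof -
  have "bij_betw (\<lambda>v. restrict v J) (VS J :: ('n \<Rightarrow> 'a) set) (PiE J (\<lambda>_. UNIV))"
    by (rule bij_betw_byWitness[where f'="\<lambda>f j. if j \<in> J then f j else 0"])
       (auto simp: VS_def fun_eq_iff PiE_iff extensional_def restrict_def)
  hence "card (VS J :: ('n \<Rightarrow> 'a) set) = card (PiE J (\<lambda>_. (UNIV :: 'a set)))"
    by (rule bij_betw_same_card)
  also have "\<dots> = card (UNIV :: 'a set) ^ card J"
    by (simp add: card_PiE)
  finally show ?thesis .
qed

lemma charsum_zero:
  fixes G :: "('n::finite \<Rightarrow> 'a::{finite,field}) set" and chi :: "('n \<Rightarrow> 'a) \<Rightarrow> complex"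
  assumes G: "linear_code G"
    and hom: "\<And>g h. g \<in> G \<Longrightarrow> h \<in> G \<Longrightarrow> chi (g + h) = chi g * chi h"
    and g0: "g0 \<in> G" "chi g0 \<noteq> 1"
  shows "(\<Sum>g\<in>G. chi g) = 0"
proof -
  have "(\<Sum>g\<in>G. chi g) = (\<Sum>g\<in>G. chi (g + g0))"
    by (rule sum.reindex_bij_witness[where i="\<lambda>g. g + g0" and j="\<lambda>g. g - g0"])
       (auto intro: lc_add lc_diff G g0)
  also have "\<dots> = chi g0 * (\<Sum>g\<in>G. chi g)"
    by (simp add: sum_distrib_left hom g0 mult.commute)
  finally have "(1 - chi g0) * (\<Sum>g\<in>G. chi g) = 0" by (simp add: algebra_simps)
  thus ?thesis using g0 by simp
qed

lemma charsum_nonzero_triv: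
  fixes G :: "('n::finite \<Rightarrow> 'a::{finite,field}) set" and chi :: "('n \<Rightarrow> 'a) \<Rightarrow> complex"
  assumes G: "linear_code G"
    and hom: "\<And>g h. g \<in> G \<Longrightarrow> h \<in> G \<Longrightarrow> chi (g + h) = chi g * chi h"
    and "(\<Sum>g\<in>G. chi g) \<noteq> 0" "g \<in> G"
  shows "chi g = 1"
  using charsum_zero[OF G hom] assms by blast

lemma psi_edot_hom: "psi (edot (g + h) x) = psi (edot g x) * psi (edot h x)"
  by (simp add: edot_add_left psi_add)

lemma CS:
  fixes C :: "('n::finite \<Rightarrow> 'a::{finite,field}) set"
  assumes C: "linear_code C"
  shows "(\<Sum>c\<in>C. psi (edot c x)) = (if x \<in> edual C then of_nat (card C) else 0)"
proof (cases "x \<in> edual C")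
  case True
  hence "\<And>c. c \<in> C \<Longrightarrow> psi (edot c x) = 1" by (auto simp: edual_def edot_comm)
  then show ?thesis using True by simp
next
  case False
  then obtain c0 where c0: "c0 \<in> C" "edot x c0 \<noteq> 0" by (auto simp: edual_def)
  then obtain t where t: "psi (edot x c0 * t) \<noteq> 1" using psi_scale_nontriv by blast
  have "(\<Sum>c\<in>C. psi (edot c x)) = 0"
  proof (rule charsum_zero[OF C psi_edot_hom])
    show "smul t c0 \<in> C" using lc_smul[OF C c0(1)] .
    have "edot (smul t c0) x = edot x c0 * t" using edot_smul_left[of t c0 x] edot_comm[of c0 x] by simp
    then show "psi (edot (smul t c0) x) \<noteq> 1" using t by simp
  qed
  then show ?thesis using False by simp
qed

lemma VS_dual_zero:
  assumes "c \<in> VS J" "c \<in> edual (VS J)"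
  shows "c = (0 :: 'n::finite \<Rightarrow> 'a::field)"
proof
  fix j
  show "c j = 0 j"
  proof (cases "j \<in> J")
    case True
    let ?e = "(\<lambda>i. if i = j then 1 else 0) :: 'n \<Rightarrow> 'a"
    have "?e \<in> VS J" using True by (auto simp: VS_def)
    hence "edot c ?e = 0" using assms(2) by (auto simp: edual_def)
    moreover have "edot c ?e = c j" unfolding edot_def by (simp add: if_distrib cong: if_cong)
    ultimately show ?thesis by simp
  next
    case False then show ?thesis using assms(1) by (auto simp: VS_def)
  qed
qed

lemma card_dual_VS:
  fixes C :: "('n::finite \<Rightarrow> 'a::{finite,field}) set"
  assumes C: "linear_code C" and CJ: "C \<subseteq> VS J"
  shows "card C * card (edual C \<inter> VS J) = card (UNIV :: 'a set) ^ card J"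
proof -
  let ?S = "\<Sum>x\<in>VS J. \<Sum>c\<in>C. psi (edot c x)"
  have "?S = (\<Sum>x\<in>VS J. if x \<in> edual C then of_nat (card C) else 0)"
    using CS[OF C] by simp
  also have "\<dots> = of_nat (card C) * of_nat (card (VS J \<inter> edual C))"
    by (simp add: sum.If_cases)
  finally have S1: "?S = of_nat (card C * card (edual C \<inter> VS J))" by (simp add: Int_commute)
  have "?S = (\<Sum>c\<in>C. \<Sum>x\<in>VS J. psi (edot x c))"
    by (subst sum.swap) (simp add: edot_comm)
  also have "\<dots> = (\<Sum>c\<in>C. if c = 0 then of_nat (card (VS J :: ('n \<Rightarrow> 'a) set)) else 0)"
  proof (rule sum.cong[OF refl])
    fix c assume "c \<in> C"
    hence cJ: "c \<in> VS J" using CJ by auto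
    show "(\<Sum>x\<in>VS J. psi (edot x c)) = (if c = 0 then of_nat (card (VS J :: ('n \<Rightarrow> 'a) set)) else 0)"
      using CS[OF lc_VS, of c J] VS_dual_zero[OF cJ] by (auto simp: edual_def)
  qed
  also have "\<dots> = of_nat (card (VS J :: ('n \<Rightarrow> 'a) set))"
    using lc_0[OF C] by (simp add: sum.delta)
  finally have "of_nat (card C * card (edual C \<inter> VS J)) = (of_nat (card (UNIV :: 'a set) ^ card J) :: complex)"
    using S1 card_VS by simp
  thus ?thesis by (simp only: of_nat_eq_iff)
qed

lemma double_dual_VS:
  fixes C :: "('n::finite \<Rightarrow> 'a::{finite,field}) set"
  assumes C: "linear_code C" and CJ: "C \<subseteq> VS J"
  shows "edual (edual C \<inter> VS J) \<inter> VS J = C"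
proof -
  let ?D = "edual C \<inter> VS J"
  have D: "linear_code ?D" using lc_edual lc_VS unfolding linear_code_def by blast
  have c1: "card C * card ?D = card (UNIV :: 'a set) ^ card J" by (rule card_dual_VS[OF C CJ])
  have c2: "card ?D * card (edual ?D \<inter> VS J) = card (UNIV :: 'a set) ^ card J"
    by (rule card_dual_VS[OF D]) auto
  have "card ?D > 0" using lc_0[OF D] by (auto simp: card_gt_0_iff)
  hence eq: "card (edual ?D \<inter> VS J) = card C" using c1 c2 by (metis mult.commute mult_left_cancel not_gr0)
  have sub: "C \<subseteq> edual ?D \<inter> VS J" using CJ by (auto simp: edual_def edot_comm)
  show ?thesis using card_subset_eq[OF _ sub] eq by auto
qed

lemma double_dual:
  fixes C :: "('n::finite \<Rightarrow> 'a::{finite,field}) set"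
  assumes C: "linear_code C"
  shows "edual (edual C) = C"
  using double_dual_VS[OF C, of UNIV] by simp


lemma psi_inv_mult[simp]: "psi (x::'a::{finite,field}) * psi (- x) = 1"
  by (simp add: psi_minus)

lemma psi_inv_mult'[simp]: "psi (- x) * psi (x::'a::{finite,field}) = 1"
  by (simp add: psi_minus)

lemma sum_delta_mult1: "(\<Sum>z\<in>UNIV. (if x = z then 1 else 0) * f z) = (f (x::'b::finite) :: complex)"
proof -
  have "(\<Sum>z\<in>UNIV. (if x = z then 1 else 0) * f z) = (\<Sum>z\<in>UNIV. if z = x then f z else 0)"
    by (intro sum.cong) auto
  thus ?thesis by simp
qed

lemma sum_delta_mult2: "(\<Sum>z\<in>UNIV. f z * (if z = y then 1 else 0)) = (f (y::'b::finite) :: complex)"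
proof -
  have "(\<Sum>z\<in>UNIV. f z * (if z = y then 1 else 0)) = (\<Sum>z\<in>UNIV. if z = y then f z else 0)"
    by (intro sum.cong) auto
  thus ?thesis by simp
qed

lemma prod_psi: "finite A \<Longrightarrow> (\<Prod>j\<in>A. psi (f j)) = psi (\<Sum>j\<in>A. f j :: 'a::{finite,field})"
  by (induction A rule: finite_induct) (auto simp: psi_add)

lemma prod_if_all: "finite A \<Longrightarrow> (\<Prod>j\<in>A. if P j then f j else (0::complex)) = (if \<forall>j\<in>A. P j then \<Prod>j\<in>A. f j else 0)"
  by (induction A rule: finite_induct) auto

lemma Eop_eq: "Eop a b x y = (if x = y + a then psi (edot b y) else 0)"
proof -
  have "Eop a b x y = (\<Prod>j\<in>UNIV. if x j = y j + a j then psi (b j * y j) else 0)"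
    unfolding Eop_def XZ1_def psi_def by simp
  also have "\<dots> = (if \<forall>j\<in>UNIV. x j = y j + a j then \<Prod>j\<in>UNIV. psi (b j * y j) else 0)"
    by (rule prod_if_all) simp
  also have "\<dots> = (if x = y + a then psi (edot b y) else 0)"
    by (simp add: prod_psi edot_def fun_eq_iff)
  finally show ?thesis .
qed

lemma sum_if_eq: "finite A \<Longrightarrow> c \<in> A \<Longrightarrow> (\<Sum>z\<in>A. if z = c then f z else 0) = f c"
  by (simp add: sum.delta)

lemma E_mult: "op_mult (Eop a b) (Eop c d) = op_scal (psi (edot b c)) (Eop (a + c) (b + d))"
proof (intro ext)
  fix x y
  have "op_mult (Eop a b) (Eop c d) x y = (\<Sum>z\<in>UNIV. if z = y + c then (if x = z + a then psi (edot b z) else 0) * psi (edot d y) else 0)"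
    unfolding op_mult_def Eop_eq by (intro sum.cong) auto
  also have "\<dots> = (if x = y + c + a then psi (edot b (y + c)) else 0) * psi (edot d y)"
    by (subst sum_if_eq) auto
  also have "\<dots> = op_scal (psi (edot b c)) (Eop (a + c) (b + d)) x y"
    unfolding op_scal_def Eop_eq by (simp add: edot_add_left edot_add_right psi_add add_ac mult_ac)
  finally show "op_mult (Eop a b) (Eop c d) x y = op_scal (psi (edot b c)) (Eop (a + c) (b + d)) x y" .
qed

lemma E_app: "op_app (Eop a b) v = (\<lambda>x. psi (edot b (x - a)) * v (x - a))"
proof (intro ext)
  fix x
  have "op_app (Eop a b) v x = (\<Sum>z\<in>UNIV. if z = x - a then psi (edot b z) * v z else 0)"
    unfolding op_app_def Eop_eq by (intro sum.cong) (auto simp: algebra_simps)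
  also have "\<dots> = psi (edot b (x - a)) * v (x - a)" by (subst sum_if_eq) auto
  finally show "op_app (Eop a b) v x = psi (edot b (x - a)) * v (x - a)" .
qed

lemma E_adj: "op_adj (Eop a b) = op_scal (psi (edot a b)) (Eop (-a) (-b))"
proof (intro ext)
  fix x y
  show "op_adj (Eop a b) x y = op_scal (psi (edot a b)) (Eop (-a) (-b)) x y"
    unfolding op_adj_def op_scal_def Eop_eq
    by (auto simp: cnj_psi edot_minus_left edot_add_right edot_minus_right edot_diff_right psi_add psi_diff
          edot_comm[of b a] algebra_simps)
qed

lemma E_00: "Eop 0 0 = op_id"
  by (intro ext) (simp add: Eop_eq op_id_def)

lemma op_mult_assoc: "op_mult (op_mult A B) C = op_mult A (op_mult B C)"
proof (intro ext)
  fix x y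
  have "op_mult (op_mult A B) C x y = (\<Sum>z\<in>UNIV. \<Sum>w\<in>UNIV. A x w * B w z * C z y)"
    unfolding op_mult_def by (simp add: sum_distrib_right)
  also have "\<dots> = (\<Sum>w\<in>UNIV. \<Sum>z\<in>UNIV. A x w * B w z * C z y)" by (rule sum.swap)
  also have "\<dots> = op_mult A (op_mult B C) x y"
    unfolding op_mult_def by (simp add: sum_distrib_left mult.assoc)
  finally show "op_mult (op_mult A B) C x y = op_mult A (op_mult B C) x y" .
qed

lemma op_app_mult: "op_app (op_mult A B) v = op_app A (op_app B v)"
proof (intro ext)
  fix x
  have "op_app (op_mult A B) v x = (\<Sum>z\<in>UNIV. \<Sum>w\<in>UNIV. A x w * B w z * v z)"
    unfolding op_mult_def op_app_def by (simp add: sum_distrib_right)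
  also have "\<dots> = (\<Sum>w\<in>UNIV. \<Sum>z\<in>UNIV. A x w * B w z * v z)" by (rule sum.swap)
  also have "\<dots> = op_app A (op_app B v) x"
    unfolding op_app_def by (simp add: sum_distrib_left mult.assoc)
  finally show "op_app (op_mult A B) v x = op_app A (op_app B v) x" .
qed

lemma op_mult_scal_left: "op_mult (op_scal c A) B = op_scal c (op_mult A B)"
  unfolding op_mult_def op_scal_def by (intro ext) (simp add: sum_distrib_left mult.assoc)

lemma op_mult_scal_right: "op_mult A (op_scal c B) = op_scal c (op_mult A B)"
  unfolding op_mult_def op_scal_def by (intro ext) (simp add: sum_distrib_left mult_ac)

lemma op_scal_scal: "op_scal c (op_scal d A) = op_scal (c * d) A"
  unfolding op_scal_def by (intro ext) (simp add: mult.assoc)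

lemma op_scal_1[simp]: "op_scal 1 A = A"
  unfolding op_scal_def by simp

lemma op_app_scal: "op_app (op_scal c A) v = (\<lambda>x. c * op_app A v x)"
  unfolding op_app_def op_scal_def by (intro ext) (simp add: sum_distrib_left mult.assoc)

lemma op_mult_id_left[simp]: "op_mult op_id A = A"
  unfolding op_mult_def op_id_def by (intro ext) (rule sum_delta_mult1)

lemma op_mult_id_right[simp]: "op_mult A op_id = A"
  unfolding op_mult_def op_id_def by (intro ext) (rule sum_delta_mult2)

lemma op_app_id[simp]: "op_app op_id v = v"
  unfolding op_app_def op_id_def by (intro ext) (rule sum_delta_mult1)

lemma op_adj_mult: "op_adj (op_mult A B) = op_mult (op_adj B) (op_adj A)"
  unfolding op_adj_def op_mult_def by (intro ext) (simp add: mult.commute)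

lemma op_adj_adj[simp]: "op_adj (op_adj A) = A"
  unfolding op_adj_def by simp

lemma op_adj_scal: "op_adj (op_scal c A) = op_scal (cnj c) (op_adj A)"
  unfolding op_adj_def op_scal_def by simp

lemma op_adj_id[simp]: "op_adj op_id = op_id"
  unfolding op_adj_def op_id_def by (intro ext) auto

lemma op_sum_apply: "(\<Sum>k\<in>K. A k) x y = (\<Sum>k\<in>K. A k x y)"
  by (induction K rule: infinite_finite_induct) auto

lemma op_add_apply: "(A + B) x y = A x y + B x y"
  by simp

lemma op_mult_sum_left: "op_mult (\<Sum>k\<in>K. A k) B = (\<Sum>k\<in>K. op_mult (A k) B)"
  unfolding op_mult_def by (intro ext) (simp add: op_sum_apply sum_distrib_right sum.swap[of _ UNIV K])

lemma op_mult_sum_right: "op_mult B (\<Sum>k\<in>K. A k) = (\<Sum>k\<in>K. op_mult B (A k))"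
  unfolding op_mult_def by (intro ext) (simp add: op_sum_apply sum_distrib_left sum.swap[of _ UNIV K])

lemma op_mult_add_left: "op_mult (A + B) C = op_mult A C + op_mult B C"
  unfolding op_mult_def by (intro ext) (simp add: distrib_right sum.distrib)

lemma op_mult_add_right: "op_mult C (A + B) = op_mult C A + op_mult C B"
  unfolding op_mult_def by (intro ext) (simp add: distrib_left sum.distrib)

lemma op_mult_diff_left: "op_mult (A - B) C = op_mult A C - op_mult B C"
  unfolding op_mult_def by (intro ext) (simp add: left_diff_distrib sum_subtractf)

lemma op_mult_diff_right: "op_mult C (A - B) = op_mult C A - op_mult C B"
  unfolding op_mult_def by (intro ext) (simp add: right_diff_distrib sum_subtractf)

lemma op_adj_sum: "op_adj (\<Sum>k\<in>K. A k) = (\<Sum>k\<in>K. op_adj (A k))"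
  unfolding op_adj_def by (intro ext) (simp add: op_sum_apply)

lemma op_adj_diff: "op_adj (A - B) = op_adj A - op_adj B"
  unfolding op_adj_def by (intro ext) simp

lemma op_app_sum: "op_app (\<Sum>k\<in>K. A k) v = (\<lambda>x. \<Sum>k\<in>K. op_app (A k) v x)"
  unfolding op_app_def by (intro ext) (simp add: op_sum_apply sum_distrib_right sum.swap[of _ UNIV K])

lemma op_app_diff: "op_app (A - B) v = (\<lambda>x. op_app A v x - op_app B v x)"
  unfolding op_app_def by (intro ext) (simp add: left_diff_distrib sum_subtractf)

lemma op_scal_sum: "op_scal c (\<Sum>k\<in>K. A k) = (\<Sum>k\<in>K. op_scal c (A k))"
  unfolding op_scal_def by (intro ext) (simp add: op_sum_apply sum_distrib_left)

lemma E_unit_left: "op_mult (op_adj (Eop a b)) (Eop a b) = op_id"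
proof -
  have "psi (edot a b) * psi (edot (- b) a) = 1"
    by (simp add: edot_minus_left edot_comm[of b a])
  thus ?thesis by (simp add: E_adj op_mult_scal_left E_mult op_scal_scal E_00)
qed

lemma E_unit_right: "op_mult (Eop a b) (op_adj (Eop a b)) = op_id"
proof -
  have "psi (edot a b) * psi (edot b (- a)) = 1"
    by (simp add: edot_minus_right edot_comm[of b a])
  thus ?thesis by (simp add: E_adj op_mult_scal_right E_mult op_scal_scal E_00)
qed

lemma conj_ketbra: "op_mult (op_mult A (ketbra v)) (op_adj A) = ketbra (op_app A v)"
  unfolding op_mult_def ketbra_def op_adj_def op_app_def
  by (intro ext) (simp add: sum_distrib_left sum_distrib_right mult_ac)

lemma conj_sum_mid: "op_mult (op_mult A (\<Sum>k\<in>K. B k)) C = (\<Sum>k\<in>K. op_mult (op_mult A (B k)) C)"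
  by (simp add: op_mult_sum_left op_mult_sum_right)

lemma conj_scal_mid: "op_mult (op_mult A (op_scal c B)) C = op_scal c (op_mult (op_mult A B) C)"
  by (simp add: op_mult_scal_left op_mult_scal_right)


lemma op_app_smul: "op_app A (\<lambda>x. c * v x) = (\<lambda>x. c * op_app A v x)"
  unfolding op_app_def by (intro ext) (simp add: sum_distrib_left mult_ac)

lemma psi_is_xi_pow: "\<exists>l. psi (t::'a::{finite,field}) = xi TYPE('a) ^ l"
  by (rule psi_xi)

lemma smul_of_nat_Suc: "smul (of_nat (Suc k)) a = a + smul (of_nat k) (a :: 'n \<Rightarrow> 'a::field)"
  by (simp add: smul_def fun_eq_iff algebra_simps)

lemma smul_of_nat_Suc': "smul (1 + of_nat k) a = a + smul (of_nat k) (a :: 'n \<Rightarrow> 'a::field)"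
  by (simp add: smul_def fun_eq_iff algebra_simps)

lemma smul_0_left[simp]: "smul 0 a = 0"
  by (simp add: smul_def fun_eq_iff)

lemma smul_char: "smul (of_nat CHAR('a)) (a :: 'n \<Rightarrow> 'a::{finite,field}) = 0"
  by (simp add: smul_def fun_eq_iff)

lemma real_pow_eq_1: "(x::real) \<ge> 0 \<Longrightarrow> n > 0 \<Longrightarrow> x ^ n = 1 \<Longrightarrow> x = 1"
  using power_eq_imp_eq_base[of x n 1] by simp

locale stab =
  fixes C1 C2 :: "('n::finite \<Rightarrow> 'a::{finite,field}) set"
    and lam :: "('n, 'a) qop \<Rightarrow> complex"
  assumes lc1: "linear_code C1" and lc2: "linear_code C2"
    and orth: "C2 \<subseteq> edual C1"
    and sc: "stab_char (prod_code C1 C2) lam"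
begin

abbreviation "D \<equiv> prod_code C1 C2"
abbreviation "Q \<equiv> stab_code D lam"

definition mu :: "('n \<Rightarrow> 'a) \<Rightarrow> ('n \<Rightarrow> 'a) \<Rightarrow> complex" where
  "mu a b = lam (Eop a b)"

lemma inD: "(a, b) \<in> D \<longleftrightarrow> a \<in> C1 \<and> b \<in> C2"
  by (simp add: prod_code_def)

lemma orth': "b \<in> C2 \<Longrightarrow> c \<in> C1 \<Longrightarrow> edot b c = 0"
  using orth by (auto simp: edual_def)

lemma lam_mult: "A \<in> stab_group D \<Longrightarrow> B \<in> stab_group D \<Longrightarrow> lam (op_mult A B) = lam A * lam B"
  using sc by (simp add: stab_char_def)

lemma lam_xi: "lam (op_scal (xi TYPE('a)) op_id) = xi TYPE('a)"
  using sc by (simp add: stab_char_def)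

lemma scal_in: "op_scal (xi TYPE('a) ^ l) op_id \<in> stab_group D"
  by (rule stab_group.scal)

lemma xi_nz: "xi TYPE('a) \<noteq> 0"
  using norm_xi_pow[where 'a='a, of 1] by auto

lemma lam_id: "lam op_id = 1"
proof -
  have i: "op_id \<in> stab_group D" using scal_in[of 0] by simp
  have x: "op_scal (xi TYPE('a)) op_id \<in> stab_group D" using scal_in[of 1] by simp
  have "lam (op_mult op_id (op_scal (xi TYPE('a)) op_id)) = lam op_id * xi TYPE('a)"
    using lam_mult[OF i x] lam_xi by simp
  thus ?thesis using lam_xi xi_nz by simp
qed

lemma lam_scal_pow: "lam (op_scal (xi TYPE('a) ^ l) op_id) = xi TYPE('a) ^ l"
proof (induction l)
  case 0 then show ?case using lam_id by simp
next
  case (Suc l)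
  have eq: "op_scal (xi TYPE('a) ^ Suc l) op_id = op_mult (op_scal (xi TYPE('a)) op_id) (op_scal (xi TYPE('a) ^ l) op_id)"
    by (simp add: op_mult_scal_left op_mult_scal_right op_scal_scal mult.commute)
  have "lam (op_scal (xi TYPE('a) ^ Suc l) op_id) = lam (op_mult (op_scal (xi TYPE('a)) op_id) (op_scal (xi TYPE('a) ^ l) op_id))"
    by (simp only: eq)
  also have "\<dots> = xi TYPE('a) * xi TYPE('a) ^ l"
    using lam_mult[OF scal_in[of 1] scal_in[of l]] Suc lam_xi by simp
  finally show ?case by simp
qed

lemma lam_scal: "A \<in> stab_group D \<Longrightarrow> lam (op_scal (psi (t::'a)) A) = psi t * lam A"
proof -
  assume A: "A \<in> stab_group D"
  obtain l where l: "psi t = xi TYPE('a) ^ l" using psi_xi[of t] by blast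
  have "op_scal (psi t) A = op_mult (op_scal (xi TYPE('a) ^ l) op_id) A"
    by (simp add: l op_mult_scal_left)
  thus ?thesis using lam_mult[OF scal_in A] lam_scal_pow l by simp
qed

lemma E_in: "a \<in> C1 \<Longrightarrow> b \<in> C2 \<Longrightarrow> Eop a b \<in> stab_group D"
  by (rule stab_group.gen) (simp add: inD)

lemma E_mult_D: "b \<in> C2 \<Longrightarrow> c \<in> C1 \<Longrightarrow> op_mult (Eop a b) (Eop c d) = Eop (a + c) (b + d)"
  by (simp add: E_mult orth')

lemma mu_add:
  assumes "a \<in> C1" "b \<in> C2" "c \<in> C1" "d \<in> C2"
  shows "mu (a + c) (b + d) = mu a b * mu c d"
  unfolding mu_def using E_mult_D[of b c a d] lam_mult[OF E_in[OF assms(1,2)] E_in[OF assms(3,4)]] assms by simp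

lemma mu_00: "mu 0 0 = 1"
  unfolding mu_def E_00 by (rule lam_id)

lemma mu_norm:
  assumes "a \<in> C1" "b \<in> C2"
  shows "norm (mu a b) = 1"
proof -
  have "mu (smul (of_nat k) a) (smul (of_nat k) b) = mu a b ^ k" for k
  proof (induction k)
    case 0 then show ?case using mu_00 by (simp add: smul_def zero_fun_def)
  next
    case (Suc k)
    have "mu (smul (of_nat (Suc k)) a) (smul (of_nat (Suc k)) b) = mu (a + smul (of_nat k) a) (b + smul (of_nat k) b)"
      by (simp only: smul_of_nat_Suc)
    also have "\<dots> = mu a b * mu (smul (of_nat k) a) (smul (of_nat k) b)"
      by (rule mu_add[OF assms lc_smul[OF lc1 assms(1)] lc_smul[OF lc2 assms(2)]])
    also have "\<dots> = mu a b ^ Suc k" using Suc by simp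
    finally show ?case .
  qed
  from this[of "CHAR('a)"] have "mu a b ^ CHAR('a) = 1" by (simp add: smul_char mu_00)
  hence "norm (mu a b) ^ CHAR('a) = 1" by (metis norm_one norm_power)
  thus ?thesis using char_pos[where 'a='a] real_pow_eq_1 by (meson norm_ge_zero)
qed

lemma mu_cnj_mult:
  assumes "a \<in> C1" "b \<in> C2"
  shows "cnj (mu a b) * mu a b = 1"
  using mu_norm[OF assms] by (metis complex_norm_square mult.commute of_real_1 power_one)

lemma mu_split:
  assumes "a \<in> C1" "b \<in> C2"
  shows "mu a b = mu a 0 * mu 0 b"
  using mu_add[OF assms(1) lc_0[OF lc2] lc_0[OF lc1] assms(2)] by simp

lemma op_app_group:
  assumes "E \<in> stab_group D"
    and v: "\<And>a b. a \<in> C1 \<Longrightarrow> b \<in> C2 \<Longrightarrow> op_app (Eop a b) v = (\<lambda>x. mu a b * v x)"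
  shows "op_app E v = (\<lambda>x. lam E * v x)"
  using assms(1)
proof induction
  case (scal l)
  then show ?case by (simp add: lam_scal_pow op_app_scal)
next
  case (gen a b)
  then show ?case using v by (simp add: inD mu_def)
next
  case (mult A B)
  then show ?case by (simp add: op_app_mult op_app_smul lam_mult mult_ac)
qed

lemma inQ_iff: "v \<in> Q \<longleftrightarrow> (\<forall>a\<in>C1. \<forall>b\<in>C2. \<forall>x. psi (edot b (x - a)) * v (x - a) = mu a b * v x)"
proof
  assume "v \<in> Q"
  show "\<forall>a\<in>C1. \<forall>b\<in>C2. \<forall>x. psi (edot b (x - a)) * v (x - a) = mu a b * v x"
  proof (intro ballI allI)
    fix a b x assume a: "a \<in> C1" and b: "b \<in> C2"
    have "op_app (Eop a b) v = (\<lambda>x. lam (Eop a b) * v x)"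
      using \<open>v \<in> Q\<close> E_in[OF a b] unfolding stab_code_def by blast
    then have "op_app (Eop a b) v x = lam (Eop a b) * v x" by simp
    then show "psi (edot b (x - a)) * v (x - a) = mu a b * v x"
      by (simp add: E_app mu_def)
  qed
next
  assume "\<forall>a\<in>C1. \<forall>b\<in>C2. \<forall>x. psi (edot b (x - a)) * v (x - a) = mu a b * v x"
  hence "\<And>a b. a \<in> C1 \<Longrightarrow> b \<in> C2 \<Longrightarrow> op_app (Eop a b) v = (\<lambda>x. mu a b * v x)"
    by (simp add: E_app fun_eq_iff)
  then show "v \<in> Q" unfolding stab_code_def using op_app_group by blast
qed

lemma Q_add: "v \<in> Q \<Longrightarrow> w \<in> Q \<Longrightarrow> (\<lambda>x. v x + w x) \<in> Q"
  unfolding inQ_iff by (simp add: distrib_left)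

lemma Q_E: "v \<in> Q \<Longrightarrow> a \<in> C1 \<Longrightarrow> b \<in> C2 \<Longrightarrow> op_app (Eop a b) v = (\<lambda>x. mu a b * v x)"
  unfolding stab_code_def mu_def using E_in by blast

definition cv :: "('n \<Rightarrow> 'a) \<Rightarrow> ('n, 'a) qvec" where
  "cv x0 = (\<lambda>x. if x - x0 \<in> C1 then cnj (mu (x - x0) 0) else 0)"

lemma cv_at: "cv x0 x0 = 1"
  unfolding cv_def using lc_0[OF lc1] mu_00 by simp

lemma cv_in_Q:
  assumes x0: "\<And>b. b \<in> C2 \<Longrightarrow> psi (edot b x0) = mu 0 b"
  shows "cv x0 \<in> Q"
  unfolding inQ_iff
proof (intro ballI allI)
  fix a b x assume a: "a \<in> C1" and b: "b \<in> C2"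
  show "psi (edot b (x - a)) * cv x0 (x - a) = mu a b * cv x0 x"
  proof (cases "x - x0 \<in> C1")
    case True
    let ?c = "x - a - x0"
    have c: "?c \<in> C1" using lc_diff[OF lc1 True a] by (simp add: algebra_simps)
    have "mu (x - x0) 0 = mu (?c + a) (0 + 0)" by (simp add: algebra_simps)
    also have "\<dots> = mu ?c 0 * mu a 0" by (rule mu_add[OF c lc_0[OF lc2] a lc_0[OF lc2]])
    finally have m1: "mu (x - x0) 0 = mu ?c 0 * mu a 0" .
    have mca: "cnj (mu a 0) * mu a 0 = 1" using mu_cnj_mult[OF a lc_0[OF lc2]] .
    have cm: "cnj (mu ?c 0) = cnj (mu (x - x0) 0) * mu a 0"
      by (simp add: m1 mult.assoc mca)
    have xa: "x0 + ?c = x - a" by (simp add: algebra_simps)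
    have "edot b (x - a) = edot b (x0 + ?c)" by (simp only: xa)
    also have "\<dots> = edot b x0 + edot b ?c" by (rule edot_add_right)
    finally have "edot b (x - a) = edot b x0 + edot b ?c" .
    hence p: "psi (edot b (x - a)) = mu 0 b" using x0[OF b] orth'[OF b c] by (simp add: psi_add)
    have "psi (edot b (x - a)) * cv x0 (x - a) = mu 0 b * (cnj (mu (x - x0) 0) * mu a 0)"
      unfolding cv_def using c p cm by simp
    also have "\<dots> = mu a b * cv x0 x" unfolding cv_def using True mu_split[OF a b] by simp
    finally show ?thesis .
  next
    case False
    have "x - a - x0 \<notin> C1"
    proof
      assume "x - a - x0 \<in> C1"
      hence "x - a - x0 + a \<in> C1" using lc_add[OF lc1 _ a] by blast
      thus False using False by (simp add: algebra_simps)
    qed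
    then show ?thesis unfolding cv_def using False by simp
  qed
qed

lemma exists_x0: "\<exists>x0. \<forall>b\<in>C2. psi (edot b x0) = mu 0 b"
proof -
  let ?chi = "\<lambda>x b. cnj (mu 0 b) * psi (edot b x)"
  let ?N = "of_nat (card (UNIV :: ('n \<Rightarrow> 'a) set)) :: complex"
  have inner: "(\<Sum>x\<in>UNIV. psi (edot b x)) = (if b = 0 then ?N else 0)" for b :: "'n \<Rightarrow> 'a"
  proof -
    have "(\<Sum>x\<in>UNIV. psi (edot b x)) = (\<Sum>x\<in>UNIV. psi (edot x b))"
      by (intro sum.cong refl arg_cong[where f=psi] edot_comm)
    also have "\<dots> = (if b \<in> edual UNIV then ?N else 0)"
      using CS[OF lc_VS[of UNIV], of b] by simp
    also have "(b \<in> edual UNIV) = (b = 0)"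
      using VS_dual_zero[of b UNIV] by (auto simp: edual_def)
    finally show ?thesis .
  qed
  have "(\<Sum>x\<in>UNIV. \<Sum>b\<in>C2. ?chi x b) = (\<Sum>b\<in>C2. \<Sum>x\<in>UNIV. ?chi x b)"
    by (rule sum.swap)
  also have "\<dots> = (\<Sum>b\<in>C2. cnj (mu 0 b) * (\<Sum>x\<in>UNIV. psi (edot b x)))"
    by (simp add: sum_distrib_left)
  also have "\<dots> = (\<Sum>b\<in>C2. if b = 0 then cnj (mu 0 b) * ?N else 0)"
    by (intro sum.cong refl) (simp add: inner)
  also have "\<dots> = cnj (mu 0 0) * ?N" using lc_0[OF lc2] by (simp add: sum.delta)
  also have "\<dots> = ?N" using mu_00 by simp
  finally have "(\<Sum>x\<in>UNIV. \<Sum>b\<in>C2. ?chi x b) \<noteq> 0" by simp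
  then obtain x0 where x0: "(\<Sum>b\<in>C2. ?chi x0 b) \<noteq> 0" by (meson sum.neutral)
  have "psi (edot b x0) = mu 0 b" if b: "b \<in> C2" for b
  proof -
    have "?chi x0 b = 1"
    proof (rule charsum_nonzero_triv[OF lc2 _ x0 b])
      fix g h assume g: "g \<in> C2" and h: "h \<in> C2"
      have "mu 0 (g + h) = mu 0 g * mu 0 h"
        using mu_add[OF lc_0[OF lc1] g lc_0[OF lc1] h] by simp
      then show "?chi x0 (g + h) = ?chi x0 g * ?chi x0 h"
        by (simp add: edot_add_left psi_add)
    qed
    hence "mu 0 b * (cnj (mu 0 b) * psi (edot b x0)) = mu 0 b" by simp
    moreover have "mu 0 b * cnj (mu 0 b) = 1" using mu_cnj_mult[OF lc_0[OF lc1] b] by (simp add: mult.commute)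
    ultimately show ?thesis by (simp add: mult.assoc[symmetric])
  qed
  thus ?thesis by blast
qed

lemma x0_shift:
  assumes x0: "\<forall>b\<in>C2. psi (edot b x0) = mu 0 b" and d: "d \<in> edual C2"
  shows "\<forall>b\<in>C2. psi (edot b (x0 + d)) = mu 0 b"
  using x0 d by (auto simp: edot_add_right psi_add edual_def edot_comm)

lemma Z_logical:
  assumes z: "z \<in> edual C1" and v: "v \<in> Q"
  shows "(\<lambda>x. psi (edot z x) * v x) \<in> Q"
  unfolding inQ_iff
proof (intro ballI allI)
  fix a b x assume a: "a \<in> C1" and b: "b \<in> C2"
  have za: "edot z a = 0" using z a by (auto simp: edual_def)
  have "psi (edot b (x - a)) * (psi (edot z (x - a)) * v (x - a))
        = psi (edot z x) * (psi (edot b (x - a)) * v (x - a))"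
    by (simp add: edot_diff_right za)
  also have "\<dots> = mu a b * (psi (edot z x) * v x)" using v a b by (simp add: inQ_iff)
  finally show "psi (edot b (x - a)) * (psi (edot z (x - a)) * v (x - a)) = mu a b * (psi (edot z x) * v x)" .
qed

lemma X_logical:
  assumes z: "z \<in> edual C2" and v: "v \<in> Q"
  shows "(\<lambda>x. v (x - z)) \<in> Q"
  unfolding inQ_iff
proof (intro ballI allI)
  fix a b x assume a: "a \<in> C1" and b: "b \<in> C2"
  have bz: "edot b z = 0" using z b by (auto simp: edual_def edot_comm)
  have "psi (edot b (x - a)) = psi (edot b (x - z - a))"
    by (simp add: edot_diff_right bz)
  hence "psi (edot b (x - a)) * v (x - a - z) = psi (edot b (x - z - a)) * v (x - z - a)"
    by (simp add: algebra_simps)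
  also have "\<dots> = mu a b * v (x - z)" using v a b by (simp add: inQ_iff)
  finally show "psi (edot b (x - a)) * v (x - a - z) = mu a b * v (x - z)" .
qed

end


definition Err :: "'n set \<Rightarrow> (('n \<Rightarrow> 'a::zero) \<times> ('n \<Rightarrow> 'a)) set" where
  "Err I = {(a, b). supp a \<subseteq> I \<and> supp b \<subseteq> I}"

lemma finite_Err[simp]: "finite (Err I :: (('n::finite \<Rightarrow> 'a::{finite,zero}) \<times> ('n \<Rightarrow> 'a)) set)"
  by (rule finite_subset[of _ UNIV]) auto

lemma Gamma_ketbra:
  "Gamma_I I (ketbra \<phi>) = (\<lambda>x y. ((1 / of_nat (card (UNIV :: 'a set))) ^ 2) ^ card I *
      (\<Sum>e\<in>Err I. ketbra (op_app (Eop (fst e) (snd e)) \<phi>) x y))"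
  for \<phi> :: "('n::finite, 'a::{finite,field}) qvec"
  unfolding Gamma_I_def Err_def
  by (intro ext) (simp add: conj_ketbra case_prod_beta power_one_over)

lemma sum_ketbra_apply: "(\<Sum>e\<in>S. ketbra (w e)) x y = (\<Sum>e\<in>S. ketbra (w e) x y)"
  by (rule op_sum_apply)

lemma R_Gamma:
  fixes L :: "nat \<Rightarrow> ('n::finite, 'a::{finite,field}) qop"
  assumes R: "\<And>rho. R rho = (\<lambda>x y. \<Sum>k<m. op_mult (op_mult (L k) rho) (op_adj (L k)) x y)"
  shows "R (Gamma_I I (ketbra \<phi>)) = (\<lambda>x y. \<Sum>k<m. \<Sum>e\<in>Err I.
      ((1 / of_nat (card (UNIV :: 'a set))) ^ 2) ^ card I * ketbra (op_app (L k) (op_app (Eop (fst e) (snd e)) \<phi>)) x y)"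
proof -
  let ?t = "((1 / of_nat (card (UNIV :: 'a set))) ^ 2) ^ card I :: complex"
  have G: "Gamma_I I (ketbra \<phi>) = op_scal ?t (\<Sum>e\<in>Err I. ketbra (op_app (Eop (fst e) (snd e)) \<phi>))"
    unfolding Gamma_ketbra op_scal_def by (simp add: op_sum_apply)
  show ?thesis
    unfolding R G conj_scal_mid conj_sum_mid conj_ketbra
    by (intro ext) (simp add: op_scal_def op_sum_apply sum_distrib_left)
qed

lemma ketbra_sum_prop:
  fixes w :: "'i \<Rightarrow> ('n, 'a) qvec" and t :: real
  assumes S: "finite S" and t: "t > 0"
    and M: "\<And>x y. (\<Sum>i\<in>S. of_real t * (w i x * cnj (w i y))) = \<phi> x * cnj (\<phi> y)"
  shows "\<forall>i\<in>S. \<exists>c. w i = (\<lambda>x. c * \<phi> x)"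
    and "(\<exists>x. \<phi> x \<noteq> 0) \<Longrightarrow> \<exists>i\<in>S. \<exists>x. w i x \<noteq> 0"
proof -
  have zero_terms: "\<forall>i\<in>S. s i = 0"
    if h: "(\<Sum>i\<in>S. of_real t * (s i * cnj (s i))) = 0" for s :: "'i \<Rightarrow> complex"
  proof -
    have "(\<Sum>i\<in>S. of_real t * (s i * cnj (s i))) = (\<Sum>i\<in>S. of_real (t * (cmod (s i))^2))"
      by (intro sum.cong refl) (metis complex_norm_square of_real_mult of_real_power)
    also have "\<dots> = of_real (\<Sum>i\<in>S. t * (cmod (s i))^2)" by simp
    finally have "(\<Sum>i\<in>S. of_real t * (s i * cnj (s i))) = of_real (\<Sum>i\<in>S. t * (cmod (s i))^2)" .
    hence "(\<Sum>i\<in>S. t * (cmod (s i))^2) = 0" using h by (metis of_real_eq_0_iff)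
    hence "\<forall>i\<in>S. t * (cmod (s i))^2 = 0"
      using sum_nonneg_eq_0_iff[OF S] t by (metis (no_types, lifting) mult_nonneg_nonneg less_imp_le zero_le_power2)
    thus ?thesis using t by auto
  qed
  show "\<forall>i\<in>S. \<exists>c. w i = (\<lambda>x. c * \<phi> x)"
  proof (cases "\<exists>x0. \<phi> x0 \<noteq> 0")
    case False
    have "\<forall>i\<in>S. w i x = 0" for x
      using zero_terms[of "\<lambda>i. w i x"] M[of x x] False by simp
    thus ?thesis using False by (intro ballI exI[of _ 0]) auto
  next
    case True
    then obtain x0 where x0: "\<phi> x0 \<noteq> 0" by blast
    have "\<forall>i\<in>S. \<phi> x0 * w i y - \<phi> y * w i x0 = 0" for y
    proof (rule zero_terms)
      let ?s = "\<lambda>i. \<phi> x0 * w i y - \<phi> y * w i x0"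
      have "(\<Sum>i\<in>S. of_real t * (?s i * cnj (?s i)))
        = \<phi> x0 * cnj (\<phi> x0) * (\<Sum>i\<in>S. of_real t * (w i y * cnj (w i y)))
          - \<phi> x0 * cnj (\<phi> y) * (\<Sum>i\<in>S. of_real t * (w i y * cnj (w i x0)))
          - \<phi> y * cnj (\<phi> x0) * (\<Sum>i\<in>S. of_real t * (w i x0 * cnj (w i y)))
          + \<phi> y * cnj (\<phi> y) * (\<Sum>i\<in>S. of_real t * (w i x0 * cnj (w i x0)))"
        by (simp add: sum_distrib_left sum_subtractf sum.distrib[symmetric] algebra_simps)
      also have "\<dots> = 0" unfolding M by (simp add: algebra_simps)
      finally show "(\<Sum>i\<in>S. of_real t * (?s i * cnj (?s i))) = 0" .
    qed
    hence "\<forall>i\<in>S. w i = (\<lambda>y. (w i x0 / \<phi> x0) * \<phi> y)"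
      using x0 by (auto simp: fun_eq_iff field_simps)
    thus ?thesis by blast
  qed
  assume "\<exists>x. \<phi> x \<noteq> 0"
  then obtain x0 where x0: "\<phi> x0 \<noteq> 0" by blast
  show "\<exists>i\<in>S. \<exists>x. w i x \<noteq> 0"
  proof (rule ccontr)
    assume "\<not> ?thesis"
    hence "\<forall>i\<in>S. w i x0 = 0" by blast
    hence "\<phi> x0 * cnj (\<phi> x0) = 0" using M[of x0 x0] by simp
    thus False using x0 by simp
  qed
qed

definition agree_out :: "'n set \<Rightarrow> ('n \<Rightarrow> 'a) \<Rightarrow> ('n \<Rightarrow> 'a) \<Rightarrow> bool" where
  "agree_out J x y \<longleftrightarrow> (\<forall>i. i \<notin> J \<longrightarrow> x i = y i)"

lemma edot_disjoint:
  assumes "u \<in> VS A" "v \<in> VS B" "A \<inter> B = {}"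
  shows "edot u (v :: 'n::finite \<Rightarrow> 'a::field) = 0"
  unfolding edot_def
proof (rule sum.neutral, intro ballI)
  fix j
  show "u j * v j = 0" using assms by (cases "j \<in> A") (auto simp: VS_def)
qed

lemma edot_agree:
  assumes "zK \<in> VS (- J)" "\<forall>i. i \<notin> J \<longrightarrow> x i = y i"
  shows "edot zK x = edot zK (y :: 'n::finite \<Rightarrow> 'a::field)"
  unfolding edot_def
proof (rule sum.cong[OF refl])
  fix j
  show "zK j * x j = zK j * y j" using assms by (cases "j \<in> J") (auto simp: VS_def)
qed

lemma local_Z_comm:
  fixes B :: "('n::finite, 'a::{finite,field}) qop"
  assumes zK: "zK \<in> VS (- J)"
  shows "op_app (local_op J B) (\<lambda>x. psi (edot zK x) * v x) = (\<lambda>x. psi (edot zK x) * op_app (local_op J B) v x)"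
  unfolding op_app_def
proof (intro ext)
  fix x
  show "(\<Sum>z\<in>UNIV. local_op J B x z * (psi (edot zK z) * v z)) = psi (edot zK x) * (\<Sum>z\<in>UNIV. local_op J B x z * v z)"
    unfolding sum_distrib_left
  proof (rule sum.cong[OF refl])
    fix z
    show "local_op J B x z * (psi (edot zK z) * v z) = psi (edot zK x) * (local_op J B x z * v z)"
      using edot_agree[OF zK, of x z] by (auto simp: local_op_def)
  qed
qed

lemma restr_shift:
  fixes x zK :: "'n \<Rightarrow> 'a::ab_group_add"
  assumes "zK \<in> VS (- J)"
  shows "restr J (x + zK) = restr J x" "restr J (x - zK) = restr J x"
  using assms by (auto simp: restr_def VS_def fun_eq_iff)

lemma local_X_comm:
  fixes B :: "('n::finite, 'a::{finite,field}) qop"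
  assumes zK: "zK \<in> VS (- J)"
  shows "op_app (local_op J B) (\<lambda>x. v (x - zK)) = (\<lambda>x. op_app (local_op J B) v (x - zK))"
  unfolding op_app_def
proof (intro ext)
  fix x
  have "(\<Sum>z\<in>UNIV. local_op J B x z * v (z - zK)) = (\<Sum>z\<in>UNIV. local_op J B x (z + zK) * v z)"
    by (rule sum.reindex_bij_witness[where i="\<lambda>z. z + zK" and j="\<lambda>z. z - zK"]) auto
  also have "\<dots> = (\<Sum>z\<in>UNIV. local_op J B (x - zK) z * v z)"
  proof (rule sum.cong[OF refl])
    fix z
    have eqv: "(\<forall>i. i \<notin> J \<longrightarrow> x i = (z + zK) i) = (\<forall>i. i \<notin> J \<longrightarrow> (x - zK) i = z i)"
      by (auto simp: algebra_simps)
    have "local_op J B x (z + zK) = local_op J B (x - zK) z"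
      unfolding local_op_def eqv restr_shift(1)[OF zK] restr_shift(2)[OF zK] by (rule refl)
    then show "local_op J B x (z + zK) * v z = local_op J B (x - zK) z * v z" by simp
  qed
  finally show "(\<Sum>z\<in>UNIV. local_op J B x z * v (z - zK)) = (\<Sum>z\<in>UNIV. local_op J B (x - zK) z * v z)" .
qed


lemma restr_in_VS: "restr J z \<in> VS J"
  by (simp add: restr_def VS_def)

lemma restr_compl_VS: "(z :: 'n \<Rightarrow> 'a::ab_group_add) - restr J z \<in> VS (- J)"
  by (simp add: restr_def VS_def)

lemma VS_mono: "I \<subseteq> J \<Longrightarrow> VS I \<subseteq> VS J"
  by (auto simp: VS_def)

context stab
begin

lemma kraus_props:
  fixes B :: "nat \<Rightarrow> ('n, 'a) qop"
  assumes R: "\<forall>rho. R rho = (\<lambda>x y. \<Sum>k<m. op_mult (op_mult (local_op J (B k)) rho) (op_adj (local_op J (B k))) x y)"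
    and rec: "R (Gamma_I I (ketbra \<phi>)) = ketbra \<phi>"
  shows "\<forall>k<m. \<forall>e\<in>Err I. \<exists>c. op_app (local_op J (B k)) (op_app (Eop (fst e) (snd e)) \<phi>) = (\<lambda>x. c * \<phi> x)"
    and "\<phi> \<noteq> 0 \<Longrightarrow> \<exists>k<m. \<exists>e\<in>Err I. \<exists>c. c \<noteq> 0 \<and> op_app (local_op J (B k)) (op_app (Eop (fst e) (snd e)) \<phi>) = (\<lambda>x. c * \<phi> x)"
proof -
  let ?S = "{..<m} \<times> (Err I :: (('n \<Rightarrow> 'a) \<times> ('n \<Rightarrow> 'a)) set)"
  let ?w = "\<lambda>i. op_app (local_op J (B (fst i))) (op_app (Eop (fst (snd i)) (snd (snd i))) \<phi>)"
  define t :: real where "t = ((1 / real (card (UNIV :: 'a set))) ^ 2) ^ card I"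
  have tpos: "t > 0" unfolding t_def by simp
  have tc: "((1 / of_nat (card (UNIV :: 'a set))) ^ 2) ^ card I = (of_real t :: complex)"
    unfolding t_def by simp
  have M: "(\<Sum>i\<in>?S. of_real t * (?w i x * cnj (?w i y))) = \<phi> x * cnj (\<phi> y)" for x y
  proof -
    have "ketbra \<phi> x y = R (Gamma_I I (ketbra \<phi>)) x y" using rec by simp
    also have "\<dots> = (\<Sum>k<m. \<Sum>e\<in>Err I. of_real t * ketbra (op_app (local_op J (B k)) (op_app (Eop (fst e) (snd e)) \<phi>)) x y)"
      using R_Gamma[where R=R and m=m and L="\<lambda>k. local_op J (B k)" and I=I and \<phi>=\<phi>] R tc by simp
    also have "\<dots> = (\<Sum>i\<in>?S. of_real t * (?w i x * cnj (?w i y)))"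
      by (simp add: sum.cartesian_product ketbra_def case_prod_beta)
    finally show ?thesis by (simp add: ketbra_def)
  qed
  have fin: "finite ?S" by simp
  note P = ketbra_sum_prop[where w="?w" and \<phi>=\<phi> and S="?S" and t=t, OF fin tpos M]
  show A: "\<forall>k<m. \<forall>e\<in>Err I. \<exists>c. op_app (local_op J (B k)) (op_app (Eop (fst e) (snd e)) \<phi>) = (\<lambda>x. c * \<phi> x)"
  proof (intro allI impI ballI)
    fix k and e :: "('n \<Rightarrow> 'a) \<times> ('n \<Rightarrow> 'a)" assume "k < m" "e \<in> Err I"
    hence "(k, e) \<in> ?S" by simp
    from P(1)[rule_format, OF this]
    show "\<exists>c. op_app (local_op J (B k)) (op_app (Eop (fst e) (snd e)) \<phi>) = (\<lambda>x. c * \<phi> x)" by simp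
  qed
  assume "\<phi> \<noteq> 0"
  then obtain x0 where "\<phi> x0 \<noteq> 0" by (auto simp: fun_eq_iff)
  then obtain i x where i: "i \<in> ?S" "?w i x \<noteq> 0" using P(2) by blast
  obtain c where c: "?w i = (\<lambda>x. c * \<phi> x)" using P(1) i(1) by blast
  have "c \<noteq> 0" using i(2) c by (metis mult_zero_left)
  thus "\<exists>k<m. \<exists>e\<in>Err I. \<exists>c. c \<noteq> 0 \<and> op_app (local_op J (B k)) (op_app (Eop (fst e) (snd e)) \<phi>) = (\<lambda>x. c * \<phi> x)"
    using i(1) c by (intro exI[of _ "fst i"] conjI bexI[of _ "snd i"] exI[of _ c]) auto
qed

lemma cv_nz: "cv x0 \<noteq> 0"
proof
  assume "cv x0 = 0"
  hence "cv x0 x0 = 0" by simp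
  with cv_at[of x0] show False by simp
qed

lemma Z_scalar_support:
  fixes B :: "nat \<Rightarrow> ('n, 'a) qop"
  assumes R: "\<forall>rho. R rho = (\<lambda>x y. \<Sum>k<m. op_mult (op_mult (local_op J (B k)) rho) (op_adj (local_op J (B k))) x y)"
    and rec: "\<forall>\<phi>\<in>Q. R (Gamma_I I (ketbra \<phi>)) = ketbra \<phi>" and IJ: "I \<subseteq> J"
    and z: "z \<in> edual C1" and zI: "restr J z \<in> VS I"
    and phi: "\<phi> \<in> Q" "\<phi> \<noteq> 0"
  shows "\<exists>\<beta>. \<forall>x. \<phi> x \<noteq> 0 \<longrightarrow> psi (edot (restr J z) x) = \<beta>"
proof -
  define zI where "zI = restr J z"
  define zK where "zK = z - zI"
  have zK: "zK \<in> VS (- J)" unfolding zK_def zI_def by (rule restr_compl_VS)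
  have zsplit: "z = zI + zK" unfolding zK_def by simp
  obtain k e c where k: "k < m" and e: "e \<in> Err I" and c0: "c \<noteq> 0"
    and kc: "op_app (local_op J (B k)) (op_app (Eop (fst e) (snd e)) \<phi>) = (\<lambda>x. c * \<phi> x)"
    using kraus_props(2)[OF R rec[rule_format, OF phi(1)] phi(2)] by blast
  obtain a b where ab: "e = (a, b)" by (cases e)
  have aI: "a \<in> VS I" and bI: "b \<in> VS I" using e ab by (auto simp: Err_def VS_supp)
  define \<phi>' where "\<phi>' = (\<lambda>x. psi (edot z x) * \<phi> x)"
  have phi': "\<phi>' \<in> Q" unfolding \<phi>'_def by (rule Z_logical[OF z phi(1)])
  have e': "(a, b - zI) \<in> Err I"
    using aI lc_diff[OF lc_VS bI zI[folded zI_def]] by (auto simp: Err_def VS_supp)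
  have zKa: "edot zK a = 0"
    using edot_disjoint[OF zK aI] IJ by auto
  have Ecomp: "op_app (Eop a (b - zI)) \<phi>' = (\<lambda>x. psi (edot zK x) * op_app (Eop a b) \<phi> x)"
  proof (intro ext)
    fix x
    have "edot (b - zI) (x - a) + edot z (x - a) = edot b (x - a) + edot zK x"
      unfolding zsplit by (simp add: edot_diff_left edot_add_left edot_diff_right zKa)
    hence "psi (edot (b - zI) (x - a) + edot z (x - a)) = psi (edot b (x - a) + edot zK x)"
      by (simp only:)
    hence "psi (edot (b - zI) (x - a)) * psi (edot z (x - a)) = psi (edot zK x) * psi (edot b (x - a))"
      by (simp only: psi_add mult.commute)
    thus "op_app (Eop a (b - zI)) \<phi>' x = psi (edot zK x) * op_app (Eop a b) \<phi> x"
      unfolding E_app \<phi>'_def by (simp add: mult.assoc[symmetric])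
  qed
  have L1: "op_app (local_op J (B k)) (op_app (Eop a (b - zI)) \<phi>') = (\<lambda>x. psi (edot zK x) * (c * \<phi> x))"
    unfolding Ecomp local_Z_comm[OF zK] using kc ab by simp
  obtain c' where c': "op_app (local_op J (B k)) (op_app (Eop a (b - zI)) \<phi>') = (\<lambda>x. c' * \<phi>' x)"
    using kraus_props(1)[OF R rec[rule_format, OF phi'], rule_format, OF k e'] by auto
  have "psi (edot zI x) = c / c'" if x: "\<phi> x \<noteq> 0" for x
  proof -
    have "c' * (psi (edot z x) * \<phi> x) = psi (edot zK x) * (c * \<phi> x)"
      using fun_cong[OF trans[OF c'[symmetric] L1], of x] unfolding \<phi>'_def .
    hence "(c' * psi (edot z x)) * \<phi> x = (psi (edot zK x) * c) * \<phi> x"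
      by (simp only: mult.assoc)
    hence "c' * psi (edot z x) = psi (edot zK x) * c" using x
      by (simp only: mult_cancel_right) simp
    hence "(c' * psi (edot zI x)) * psi (edot zK x) = c * psi (edot zK x)"
      unfolding zsplit by (simp add: edot_add_left psi_add mult_ac)
    hence eq: "c' * psi (edot zI x) = c" by simp
    hence "c' \<noteq> 0" using c0 by auto
    thus ?thesis using eq by (simp add: field_simps)
  qed
  thus ?thesis unfolding zI_def by blast
qed

lemma nec_Z:
  assumes TP: "TP_op_on J R"
    and rec: "\<forall>\<phi>\<in>Q. R (Gamma_I I (ketbra \<phi>)) = ketbra \<phi>" and IJ: "I \<subseteq> J"
    and z: "z \<in> edual C1" and zI: "restr J z \<in> VS I"
  shows "restr J z \<in> C2"
proof -
  obtain m and B :: "nat \<Rightarrow> ('n, 'a) qop" where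
    R: "\<forall>rho. R rho = (\<lambda>x y. \<Sum>k<m. op_mult (op_mult (local_op J (B k)) rho) (op_adj (local_op J (B k))) x y)"
    using TP unfolding TP_op_on_def by blast
  note ZS = Z_scalar_support[OF R rec IJ z zI]
  obtain x0 where x0: "\<forall>b\<in>C2. psi (edot b x0) = mu 0 b" using exists_x0 by blast
  have B: "psi (edot (restr J z) d) = 1" if d: "d \<in> edual C2" for d
  proof -
    define x1 where "x1 = x0 + d"
    have x1: "\<forall>b\<in>C2. psi (edot b x1) = mu 0 b" unfolding x1_def by (rule x0_shift[OF x0 d])
    have Q0: "cv x0 \<in> Q" using cv_in_Q x0 by blast
    have Q1: "cv x1 \<in> Q" using cv_in_Q x1 by blast
    have "\<exists>\<phi>\<in>Q. \<phi> x0 \<noteq> 0 \<and> \<phi> x1 \<noteq> 0"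
    proof (cases "cv x1 x0 = 0")
      case False
      have "cv x1 x0 \<noteq> 0 \<and> cv x1 x1 \<noteq> 0" using False cv_at[of x1] by simp
      then show ?thesis using Q1 by blast
    next
      case True
      have n01: "x0 - x1 \<notin> C1"
      proof
        assume in1: "x0 - x1 \<in> C1"
        have "cnj (mu (x0 - x1) 0) \<noteq> 0" using mu_norm[OF in1 lc_0[OF lc2]] by auto
        moreover have "cv x1 x0 = cnj (mu (x0 - x1) 0)" using in1 unfolding cv_def by simp
        ultimately show False using True by simp
      qed
      have n10: "x1 - x0 \<notin> C1"
      proof
        assume "x1 - x0 \<in> C1"
        hence "- (x1 - x0) \<in> C1" by (rule lc_minus[OF lc1])
        hence "x0 - x1 \<in> C1" by (simp only: minus_diff_eq)
        with n01 show False by blast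
      qed
      have "cv x0 x1 = 0" using n10 unfolding cv_def by simp
      define \<psi> where "\<psi> = (\<lambda>x. cv x0 x + cv x1 x)"
      have p1: "\<psi> \<in> Q" unfolding \<psi>_def by (rule Q_add[OF Q0 Q1])
      have p2: "\<psi> x0 \<noteq> 0" unfolding \<psi>_def using True cv_at[of x0] by simp
      have p3: "\<psi> x1 \<noteq> 0" unfolding \<psi>_def using \<open>cv x0 x1 = 0\<close> cv_at[of x1] by simp
      show ?thesis using p1 p2 p3 by blast
    qed
    then obtain \<phi> where phi: "\<phi> \<in> Q" "\<phi> x0 \<noteq> 0" "\<phi> x1 \<noteq> 0" by blast
    have "\<phi> \<noteq> 0" using phi(2) by auto
    then obtain \<beta> where "\<forall>x. \<phi> x \<noteq> 0 \<longrightarrow> psi (edot (restr J z) x) = \<beta>" using ZS phi(1) by blast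
    hence "psi (edot (restr J z) x1) = psi (edot (restr J z) x0)" using phi by auto
    thus ?thesis unfolding x1_def by (simp add: edot_add_right psi_add)
  qed
  have "\<forall>d\<in>edual C2. edot (restr J z) d = 0"
  proof
    fix d assume d: "d \<in> edual C2"
    show "edot (restr J z) d = 0"
    proof (rule ccontr)
      assume ne: "edot (restr J z) d \<noteq> 0"
      obtain t where t: "psi (edot (restr J z) d * t) \<noteq> 1" using psi_scale_nontriv[OF ne] by blast
      have "smul t d \<in> edual C2" using lc_smul[OF lc_edual d] .
      from B[OF this] have "psi (edot (restr J z) d * t) = 1" by (simp add: edot_smul_right mult.commute)
      with t show False by simp
    qed
  qed
  hence "restr J z \<in> edual (edual C2)" by (simp add: edual_def)
  thus ?thesis using double_dual[OF lc2] by simp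
qed

lemma nec_X:
  assumes TP: "TP_op_on J R"
    and rec: "\<forall>\<phi>\<in>Q. R (Gamma_I I (ketbra \<phi>)) = ketbra \<phi>" and IJ: "I \<subseteq> J"
    and z: "z \<in> edual C2" and zI: "restr J z \<in> VS I"
  shows "restr J z \<in> C1"
proof -
  obtain m and B :: "nat \<Rightarrow> ('n, 'a) qop" where
    R: "\<forall>rho. R rho = (\<lambda>x y. \<Sum>k<m. op_mult (op_mult (local_op J (B k)) rho) (op_adj (local_op J (B k))) x y)"
    using TP unfolding TP_op_on_def by blast
  obtain x0 where x0: "\<forall>b\<in>C2. psi (edot b x0) = mu 0 b" using exists_x0 by blast
  define \<phi> where "\<phi> = cv x0"
  have phi: "\<phi> \<in> Q" "\<phi> \<noteq> 0" unfolding \<phi>_def using cv_in_Q x0 cv_nz by auto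
  define zI where "zI = restr J z"
  define zK where "zK = z - zI"
  have zK: "zK \<in> VS (- J)" unfolding zK_def zI_def by (rule restr_compl_VS)
  have zsplit: "z = zI + zK" unfolding zK_def by simp
  obtain k e c where k: "k < m" and e: "e \<in> Err I" and c0: "c \<noteq> 0"
    and kc: "op_app (local_op J (B k)) (op_app (Eop (fst e) (snd e)) \<phi>) = (\<lambda>x. c * \<phi> x)"
    using kraus_props(2)[OF R rec[rule_format, OF phi(1)] phi(2)] by blast
  obtain a b where ab: "e = (a, b)" by (cases e)
  have aI: "a \<in> VS I" and bI: "b \<in> VS I" using e ab by (auto simp: Err_def VS_supp)
  define \<phi>' where "\<phi>' = (\<lambda>x. \<phi> (x - z))"
  have phi': "\<phi>' \<in> Q" unfolding \<phi>'_def by (rule X_logical[OF z phi(1)])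
  have e': "(a - zI, b) \<in> Err I"
    using bI lc_diff[OF lc_VS aI zI[folded zI_def]] by (auto simp: Err_def VS_supp)
  have bzK: "edot b zK = 0"
    using edot_disjoint[OF bI zK] IJ by auto
  let ?s = "psi (edot b zI)"
  have Ecomp: "op_app (Eop (a - zI) b) \<phi>' = (\<lambda>x. ?s * op_app (Eop a b) \<phi> (x - zK))"
  proof (intro ext)
    fix x
    have v: "x - (a - zI) - z = x - zK - a" unfolding zsplit by (simp add: algebra_simps)
    have "edot b (x - (a - zI)) = edot b zI + edot b (x - zK - a)"
      by (simp add: edot_diff_right edot_add_right bzK)
    thus "op_app (Eop (a - zI) b) \<phi>' x = ?s * op_app (Eop a b) \<phi> (x - zK)"
      unfolding E_app \<phi>'_def v by (simp add: psi_add mult.assoc)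
  qed
  have L1: "op_app (local_op J (B k)) (op_app (Eop (a - zI) b) \<phi>') = (\<lambda>x. ?s * (c * \<phi> (x - zK)))"
  proof -
    have "op_app (local_op J (B k)) (op_app (Eop (a - zI) b) \<phi>')
        = (\<lambda>x. ?s * op_app (local_op J (B k)) (\<lambda>x. op_app (Eop a b) \<phi> (x - zK)) x)"
      unfolding Ecomp by (rule op_app_smul)
    also have "\<dots> = (\<lambda>x. ?s * op_app (local_op J (B k)) (op_app (Eop a b) \<phi>) (x - zK))"
      unfolding local_X_comm[OF zK] by simp
    also have "\<dots> = (\<lambda>x. ?s * (c * \<phi> (x - zK)))" using kc ab by simp
    finally show ?thesis .
  qed
  obtain c' where c': "op_app (local_op J (B k)) (op_app (Eop (a - zI) b) \<phi>') = (\<lambda>x. c' * \<phi>' x)"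
    using kraus_props(1)[OF R rec[rule_format, OF phi'], rule_format, OF k e'] by auto
  have "c' * \<phi>' (x0 + zK) = ?s * (c * \<phi> (x0 + zK - zK))"
    using fun_cong[OF trans[OF c'[symmetric] L1], of "x0 + zK"] .
  also have "\<dots> = ?s * c" unfolding \<phi>_def by (simp add: cv_at)
  finally have "c' * \<phi> (x0 + zK - z) \<noteq> 0" unfolding \<phi>'_def using c0 by simp
  hence "\<phi> (x0 - zI) \<noteq> 0" unfolding zsplit by (simp add: algebra_simps)
  hence "x0 - zI - x0 \<in> C1" unfolding \<phi>_def cv_def by (auto split: if_splits)
  hence "- zI \<in> C1" by simp
  hence "zI \<in> C1" using lc_minus[OF lc1, of "- zI"] by simp
  thus ?thesis unfolding zI_def .
qed

end


lemma sum_prod_swap3: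
  "(\<Sum>z\<in>Z. (\<Sum>g\<in>G. f g z) * (\<Sum>h\<in>H. k h z)) = (\<Sum>g\<in>G. \<Sum>h\<in>H. \<Sum>z\<in>Z. f g z * k h z :: complex)"
proof -
  have "(\<Sum>z\<in>Z. (\<Sum>g\<in>G. f g z) * (\<Sum>h\<in>H. k h z)) = (\<Sum>z\<in>Z. \<Sum>g\<in>G. \<Sum>h\<in>H. f g z * k h z)"
    by (simp add: sum_product)
  also have "\<dots> = (\<Sum>g\<in>G. \<Sum>z\<in>Z. \<Sum>h\<in>H. f g z * k h z)" by (rule sum.swap)
  also have "\<dots> = (\<Sum>g\<in>G. \<Sum>h\<in>H. \<Sum>z\<in>Z. f g z * k h z)" by (intro sum.cong refl) (rule sum.swap)
  finally show ?thesis .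
qed

lemma norm1_cnj: "norm (z::complex) = 1 \<Longrightarrow> cnj z * z = 1"
proof -
  assume "norm z = 1"
  hence "z * cnj z = 1" using complex_norm_square[of z] by simp
  thus ?thesis by (simp add: mult.commute)
qed

lemma cnj_mult_eq_1:
  assumes "norm (s::complex) = 1" "cnj s * t = 1"
  shows "t = s"
proof -
  have "s * cnj s = 1" using norm1_cnj[OF assms(1)] by (simp add: mult.commute)
  hence "s * (cnj s * t) = t" by (simp add: mult.assoc[symmetric])
  thus ?thesis using assms(2) by simp
qed

locale chargrp =
  fixes G :: "'g::ab_group_add set" and U :: "'g \<Rightarrow> ('n::finite, 'a::{finite,field}) qop"
  assumes finG: "finite G" and G0: "0 \<in> G"
    and Gadd: "\<And>g h. g \<in> G \<Longrightarrow> h \<in> G \<Longrightarrow> g + h \<in> G"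
    and Gneg: "\<And>g. g \<in> G \<Longrightarrow> - g \<in> G"
    and U_add: "\<And>g h. g \<in> G \<Longrightarrow> h \<in> G \<Longrightarrow> op_mult (U g) (U h) = U (g + h)"
    and U_adj: "\<And>g. g \<in> G \<Longrightarrow> op_adj (U g) = U (- g)"
begin

lemma Gdiff: "g \<in> G \<Longrightarrow> h \<in> G \<Longrightarrow> g - h \<in> G"
proof -
  assume "g \<in> G" "h \<in> G"
  hence "g + - h \<in> G" by (intro Gadd Gneg)
  thus ?thesis by (simp only: diff_conv_add_uminus)
qed

definition ischar :: "('g \<Rightarrow> complex) \<Rightarrow> bool" where
  "ischar s \<longleftrightarrow> (\<forall>g\<in>G. \<forall>h\<in>G. s (g + h) = s g * s h) \<and> (\<forall>g\<in>G. norm (s g) = 1)"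

definition Pi :: "('g \<Rightarrow> complex) \<Rightarrow> ('n, 'a) qop" where
  "Pi s = (\<lambda>x y. (1 / of_nat (card G)) * (\<Sum>g\<in>G. cnj (s g) * U g x y))"

lemma N_pos: "card G > 0"
  using finG G0 by (auto simp: card_gt_0_iff)

lemma charsum_gen:
  fixes chi :: "'g \<Rightarrow> complex"
  assumes hom: "\<And>g h. g \<in> G \<Longrightarrow> h \<in> G \<Longrightarrow> chi (g + h) = chi g * chi h"
  shows "(\<Sum>g\<in>G. chi g) = (if \<forall>g\<in>G. chi g = 1 then of_nat (card G) else 0)"
proof (cases "\<forall>g\<in>G. chi g = 1")
  case True then show ?thesis by simp
next
  case False
  then obtain g0 where g0: "g0 \<in> G" "chi g0 \<noteq> 1" by blast
  have "(\<Sum>g\<in>G. chi g) = (\<Sum>g\<in>G. chi (g + g0))"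
    by (rule sum.reindex_bij_witness[where i="\<lambda>g. g + g0" and j="\<lambda>g. g - g0"])
       (auto intro: Gadd Gdiff g0)
  also have "\<dots> = (\<Sum>g\<in>G. chi g0 * chi g)"
  proof (rule sum.cong[OF refl])
    fix g assume gG: "g \<in> G"
    have "chi (g + g0) = chi g * chi g0" by (rule hom[OF gG g0(1)])
    also have "\<dots> = chi g0 * chi g" by (rule mult.commute)
    finally show "chi (g + g0) = chi g0 * chi g" .
  qed
  also have "\<dots> = chi g0 * (\<Sum>g\<in>G. chi g)"
    by (simp add: sum_distrib_left)
  finally have "(1 - chi g0) * (\<Sum>g\<in>G. chi g) = 0" by (simp add: algebra_simps)
  thus ?thesis using g0 False by auto
qed

lemma ischar_0: "ischar s \<Longrightarrow> s 0 = 1"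
proof -
  assume s: "ischar s"
  have "s (0 + 0) = s 0 * s 0" using s G0 unfolding ischar_def by blast
  hence "s 0 = s 0 * s 0" by simp
  moreover have "norm (s 0) = 1" using s G0 unfolding ischar_def by blast
  hence "s 0 \<noteq> 0" by auto
  ultimately show ?thesis by simp
qed

lemma ischar_cnj_mult: "ischar s \<Longrightarrow> g \<in> G \<Longrightarrow> cnj (s g) * s g = 1"
  unfolding ischar_def using norm1_cnj by blast

lemma ischar_neg: "ischar s \<Longrightarrow> g \<in> G \<Longrightarrow> s (- g) = cnj (s g)"
proof -
  assume s: "ischar s" and g: "g \<in> G"
  have "s (- g + g) = s (- g) * s g" using s g Gneg[OF g] unfolding ischar_def by blast
  hence h: "s (- g) * s g = 1" using ischar_0[OF s] by simp
  have c: "s g * cnj (s g) = 1" using ischar_cnj_mult[OF s g] by (simp add: mult.commute)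
  have "s (- g) = s (- g) * (s g * cnj (s g))" using c by simp
  also have "\<dots> = (s (- g) * s g) * cnj (s g)" by (simp only: mult.assoc)
  also have "\<dots> = cnj (s g)" using h by simp
  finally show ?thesis .
qed

lemma ischar_diff: "ischar t \<Longrightarrow> k \<in> G \<Longrightarrow> g \<in> G \<Longrightarrow> t (k - g) = t k * cnj (t g)"
proof -
  assume t: "ischar t" and k: "k \<in> G" and g: "g \<in> G"
  have "t (k - g + g) = t (k - g) * t g" using t Gdiff[OF k g] g unfolding ischar_def by blast
  hence "t k = t (k - g) * t g" by simp
  hence "t k * cnj (t g) = t (k - g) * (cnj (t g) * t g)" by (simp add: mult_ac)
  thus ?thesis using ischar_cnj_mult[OF t g] by simp
qed

lemma charsum_pair:
  assumes s: "ischar s" and t: "ischar t"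
  shows "(\<Sum>g\<in>G. cnj (s g) * t g) = (if \<forall>g\<in>G. s g = t g then of_nat (card G) else 0)"
proof -
  have "(\<Sum>g\<in>G. cnj (s g) * t g) = (if \<forall>g\<in>G. cnj (s g) * t g = 1 then of_nat (card G) else 0)"
    by (rule charsum_gen) (use s t in \<open>auto simp: ischar_def mult_ac\<close>)
  also have "(\<forall>g\<in>G. cnj (s g) * t g = 1) = (\<forall>g\<in>G. s g = t g)"
  proof safe
    fix g assume "\<forall>g\<in>G. cnj (s g) * t g = 1" "g \<in> G"
    thus "s g = t g" using cnj_mult_eq_1[of "s g" "t g"] s by (auto simp: ischar_def)
  next
    fix g assume "\<forall>g\<in>G. s g = t g" "g \<in> G"
    thus "cnj (s g) * t g = 1" using ischar_cnj_mult[OF s] by auto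
  qed
  finally show ?thesis .
qed

lemma Pi_adj: "ischar s \<Longrightarrow> op_adj (Pi s) = Pi s"
proof (intro ext)
  fix x y assume s: "ischar s"
  have "op_adj (Pi s) x y = (1 / of_nat (card G)) * (\<Sum>g\<in>G. s g * op_adj (U g) x y)"
    unfolding op_adj_def Pi_def by (simp add: op_adj_def)
  also have "\<dots> = (1 / of_nat (card G)) * (\<Sum>g\<in>G. s g * U (- g) x y)"
    by (simp add: U_adj)
  also have "(\<Sum>g\<in>G. s g * U (- g) x y) = (\<Sum>g\<in>G. s (- g) * U g x y)"
    by (rule sum.reindex_bij_witness[where i="\<lambda>g. - g" and j="\<lambda>g. - g"]) (auto intro: Gneg)
  also have "\<dots> = (\<Sum>g\<in>G. cnj (s g) * U g x y)"
    by (intro sum.cong refl) (simp add: ischar_neg[OF s])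
  finally show "op_adj (Pi s) x y = Pi s x y" unfolding Pi_def .
qed

lemma Pi_mult:
  assumes s: "ischar s" and t: "ischar t"
  shows "op_mult (Pi s) (Pi t) = (if \<forall>g\<in>G. s g = t g then Pi t else (\<lambda>x y. 0))"
proof (intro ext)
  fix x y
  let ?c = "1 / of_nat (card G) :: complex"
  have "op_mult (Pi s) (Pi t) x y
      = ?c * ?c * (\<Sum>z\<in>UNIV. (\<Sum>g\<in>G. cnj (s g) * U g x z) * (\<Sum>h\<in>G. cnj (t h) * U h z y))"
    unfolding op_mult_def Pi_def by (simp add: sum_distrib_left mult_ac)
  also have "(\<Sum>z\<in>UNIV. (\<Sum>g\<in>G. cnj (s g) * U g x z) * (\<Sum>h\<in>G. cnj (t h) * U h z y))
      = (\<Sum>g\<in>G. \<Sum>h\<in>G. \<Sum>z\<in>UNIV. cnj (s g) * U g x z * (cnj (t h) * U h z y))"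
    by (rule sum_prod_swap3)
  also have "\<dots> = (\<Sum>g\<in>G. \<Sum>h\<in>G. cnj (s g) * cnj (t h) * U (g + h) x y)"
  proof (intro sum.cong refl)
    fix g h assume g: "g \<in> G" and h: "h \<in> G"
    have "(\<Sum>z\<in>UNIV. cnj (s g) * U g x z * (cnj (t h) * U h z y)) = cnj (s g) * cnj (t h) * op_mult (U g) (U h) x y"
      unfolding op_mult_def by (simp add: sum_distrib_left mult_ac)
    thus "(\<Sum>z\<in>UNIV. cnj (s g) * U g x z * (cnj (t h) * U h z y)) = cnj (s g) * cnj (t h) * U (g + h) x y"
      using U_add[OF g h] by simp
  qed
  also have "\<dots> = (\<Sum>g\<in>G. \<Sum>k\<in>G. cnj (s g) * cnj (t (k - g)) * U k x y)"
  proof (rule sum.cong[OF refl])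
    fix g assume g: "g \<in> G"
    show "(\<Sum>h\<in>G. cnj (s g) * cnj (t h) * U (g + h) x y) = (\<Sum>k\<in>G. cnj (s g) * cnj (t (k - g)) * U k x y)"
      by (rule sum.reindex_bij_witness[where i="\<lambda>k. k - g" and j="\<lambda>h. g + h"]) (auto intro: Gadd Gdiff g)
  qed
  also have "\<dots> = (\<Sum>g\<in>G. \<Sum>k\<in>G. (cnj (s g) * t g) * (cnj (t k) * U k x y))"
  proof (intro sum.cong refl)
    fix g k assume g: "g \<in> G" and k: "k \<in> G"
    show "cnj (s g) * cnj (t (k - g)) * U k x y = (cnj (s g) * t g) * (cnj (t k) * U k x y)"
      using ischar_diff[OF t k g] by (simp add: mult_ac)
  qed
  also have "\<dots> = (\<Sum>g\<in>G. cnj (s g) * t g) * (\<Sum>k\<in>G. cnj (t k) * U k x y)"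
    by (simp add: sum_product)
  also have "\<dots> = (if \<forall>g\<in>G. s g = t g then of_nat (card G) else 0) * (\<Sum>k\<in>G. cnj (t k) * U k x y)"
    by (simp add: charsum_pair[OF s t])
  finally show "op_mult (Pi s) (Pi t) x y = (if \<forall>g\<in>G. s g = t g then Pi t else (\<lambda>x y. 0)) x y"
    unfolding Pi_def using N_pos by auto
qed

lemma Pi_idem: "ischar s \<Longrightarrow> op_mult (Pi s) (Pi s) = Pi s"
  using Pi_mult[of s s] by simp

lemma Pi_app:
  assumes s: "ischar s" and chi: "ischar chi"
    and w: "\<And>g. g \<in> G \<Longrightarrow> op_app (U g) w = (\<lambda>x. chi g * w x)"
  shows "op_app (Pi s) w = (if \<forall>g\<in>G. s g = chi g then w else (\<lambda>x. 0))"
proof (intro ext)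
  fix x
  have "op_app (Pi s) w x = (1 / of_nat (card G)) * (\<Sum>g\<in>G. cnj (s g) * op_app (U g) w x)"
    unfolding op_app_def Pi_def
    by (simp add: sum_distrib_left sum_distrib_right mult_ac sum.swap[of _ UNIV G])
  also have "(\<Sum>g\<in>G. cnj (s g) * op_app (U g) w x) = (\<Sum>g\<in>G. (cnj (s g) * chi g) * w x)"
    by (rule sum.cong[OF refl]) (simp add: w)
  also have "\<dots> = (\<Sum>g\<in>G. cnj (s g) * chi g) * w x"
    by (simp add: sum_distrib_right)
  also have "(1 / of_nat (card G)) * ((\<Sum>g\<in>G. cnj (s g) * chi g) * w x) = (if \<forall>g\<in>G. s g = chi g then w else (\<lambda>x. 0)) x"
  proof (cases "\<forall>g\<in>G. s g = chi g")
    case True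
    then show ?thesis unfolding charsum_pair[OF s chi] using N_pos by simp
  next
    case False
    then show ?thesis unfolding charsum_pair[OF s chi] using False by auto
  qed
  finally show "op_app (Pi s) w x = (if \<forall>g\<in>G. s g = chi g then w else (\<lambda>x. 0)) x" .
qed

lemma kraus_sum:
  fixes Ss :: "('g \<Rightarrow> complex) set" and V :: "('g \<Rightarrow> complex) \<Rightarrow> ('n, 'a) qop"
  assumes fin: "finite Ss" and ch: "\<And>s. s \<in> Ss \<Longrightarrow> ischar s"
    and dist: "\<And>s t. s \<in> Ss \<Longrightarrow> t \<in> Ss \<Longrightarrow> \<forall>g\<in>G. s g = t g \<Longrightarrow> s = t"
    and unit: "\<And>s. s \<in> Ss \<Longrightarrow> op_mult (V s) (op_adj (V s)) = op_id"
  defines "P \<equiv> (\<Sum>s\<in>Ss. Pi s)"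
  shows "(\<Sum>s\<in>Ss. op_mult (op_adj (op_mult (op_adj (V s)) (Pi s))) (op_mult (op_adj (V s)) (Pi s)))
         + op_mult (op_adj (op_id - P)) (op_id - P) = op_id"
proof -
  have A: "op_mult (op_adj (op_mult (op_adj (V s)) (Pi s))) (op_mult (op_adj (V s)) (Pi s)) = Pi s"
    if s: "s \<in> Ss" for s
  proof -
    have "op_mult (op_adj (op_mult (op_adj (V s)) (Pi s))) (op_mult (op_adj (V s)) (Pi s))
        = op_mult (Pi s) (op_mult (op_mult (V s) (op_adj (V s))) (Pi s))"
      by (simp add: op_adj_mult Pi_adj[OF ch[OF s]] op_mult_assoc)
    also have "\<dots> = Pi s" using unit[OF s] Pi_idem[OF ch[OF s]] by simp
    finally show ?thesis .
  qed
  have Padj: "op_adj P = P" unfolding P_def by (simp add: op_adj_sum Pi_adj ch)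
  have PP: "op_mult P P = P"
  proof -
    have "op_mult P P = (\<Sum>t\<in>Ss. \<Sum>s\<in>Ss. op_mult (Pi s) (Pi t))"
      unfolding P_def by (simp add: op_mult_sum_left op_mult_sum_right)
    also have "\<dots> = (\<Sum>t\<in>Ss. \<Sum>s\<in>Ss. if s = t then Pi t else 0)"
    proof (rule sum.cong[OF refl], rule sum.cong[OF refl])
      fix s t assume t: "t \<in> Ss" and s: "s \<in> Ss"
      show "op_mult (Pi s) (Pi t) = (if s = t then Pi t else 0)"
        using Pi_mult[OF ch[OF s] ch[OF t]] dist[OF s t] by (auto simp: zero_fun_def)
    qed
    also have "\<dots> = P" unfolding P_def using fin by simp
    finally show ?thesis .
  qed
  have B: "op_mult (op_adj (op_id - P)) (op_id - P) = op_id - P"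
    by (simp add: op_adj_diff Padj op_mult_diff_left op_mult_diff_right PP)
  show ?thesis unfolding B using A P_def by simp
qed

end


definition loc :: "'n set \<Rightarrow> ('n::finite, 'a::{finite,field}) qop \<Rightarrow> bool" where
  "loc J A \<longleftrightarrow> (\<forall>x y. A x y = (if (\<forall>i. i \<notin> J \<longrightarrow> x i = y i) then A (restr J x) (restr J y) else 0))"

lemma locD: "loc J A \<Longrightarrow> A x y = (if (\<forall>i. i \<notin> J \<longrightarrow> x i = y i) then A (restr J x) (restr J y) else 0)"
  unfolding loc_def by blast

lemma locI: "(\<And>x y. A x y = (if (\<forall>i. i \<notin> J \<longrightarrow> x i = y i) then A (restr J x) (restr J y) else 0)) \<Longrightarrow> loc J A"
  unfolding loc_def by blast

lemma loc_local_op: "loc J A \<Longrightarrow> local_op J A = A"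
proof (intro ext)
  fix x y assume "loc J A"
  from locD[OF this, of x y] show "local_op J A x y = A x y" unfolding local_op_def by (rule sym)
qed

lemma restr_restr[simp]: "restr J (restr J x) = restr J x"
  by (simp add: restr_def fun_eq_iff)

lemma ag_sym: "(\<forall>i. i \<notin> J \<longrightarrow> x i = y i) = (\<forall>i. i \<notin> J \<longrightarrow> y i = x i)"
  by auto

lemma loc_id: "loc J (op_id :: ('n::finite, 'a::{finite,field}) qop)"
proof (rule locI)
  fix x y :: "'n \<Rightarrow> 'a"
  show "op_id x y = (if \<forall>i. i \<notin> J \<longrightarrow> x i = y i then op_id (restr J x) (restr J y) else 0)"
  proof (cases "\<forall>i. i \<notin> J \<longrightarrow> x i = y i")
    case True
    have "(restr J x = restr J y) = (x = y)"
    proof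
      assume r: "restr J x = restr J y"
      show "x = y"
      proof
        fix i show "x i = y i"
        proof (cases "i \<in> J")
          case True then show ?thesis using fun_cong[OF r, of i] by (simp add: restr_def)
        next
          case False then show ?thesis using \<open>\<forall>i. i \<notin> J \<longrightarrow> x i = y i\<close> by blast
        qed
      qed
    qed simp
    then show ?thesis using True by (simp add: op_id_def)
  next
    case False
    hence "x \<noteq> y" by auto
    then show ?thesis using False by (simp add: op_id_def)
  qed
qed

lemma loc_E:
  fixes a b :: "'n::finite \<Rightarrow> 'a::{finite,field}"
  assumes a: "a \<in> VS J" and b: "b \<in> VS J"
  shows "loc J (Eop a b)"
  unfolding loc_def
proof (intro allI)
  fix x y :: "'n \<Rightarrow> 'a"
  have eb: "edot b (restr J y) = edot b y"
    unfolding edot_def restr_def using b by (intro sum.cong refl) (auto simp: VS_def)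
  show "Eop a b x y = (if \<forall>i. i \<notin> J \<longrightarrow> x i = y i then Eop a b (restr J x) (restr J y) else 0)"
  proof (cases "\<forall>i. i \<notin> J \<longrightarrow> x i = y i")
    case True
    have "(restr J x = restr J y + a) = (x = y + a)"
    proof
      assume r: "restr J x = restr J y + a"
      show "x = y + a"
      proof
        fix i show "x i = (y + a) i"
        proof (cases "i \<in> J")
          case True then show ?thesis using fun_cong[OF r, of i] by (simp add: restr_def)
        next
          case False then show ?thesis using True a by (simp add: VS_def)
        qed
      qed
    next
      assume r: "x = y + a"
      show "restr J x = restr J y + a"
      proof
        fix i show "restr J x i = (restr J y + a) i"
          using r a by (cases "i \<in> J") (auto simp: restr_def VS_def)
      qed
    qed
    then show ?thesis using True unfolding Eop_eq eb by simp
  next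
    case False
    have "x \<noteq> y + a" using False a by (auto simp: VS_def)
    then show ?thesis using False unfolding Eop_eq by simp
  qed
qed

lemma loc_adj: "loc J A \<Longrightarrow> loc J (op_adj A)"
proof (rule locI)
  fix x y assume A: "loc J A"
  show "op_adj A x y = (if \<forall>i. i \<notin> J \<longrightarrow> x i = y i then op_adj A (restr J x) (restr J y) else 0)"
    unfolding op_adj_def locD[OF A, of y x] ag_sym[of J y x] by auto
qed

lemma loc_scal: "loc J A \<Longrightarrow> loc J (op_scal c A)"
proof (rule locI)
  fix x y assume A: "loc J A"
  show "op_scal c A x y = (if \<forall>i. i \<notin> J \<longrightarrow> x i = y i then op_scal c A (restr J x) (restr J y) else 0)"
    unfolding op_scal_def locD[OF A, of x y] by auto
qed

lemma loc_diff: "loc J A \<Longrightarrow> loc J B \<Longrightarrow> loc J (A - B)"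
proof (rule locI)
  fix x y assume A: "loc J A" and B: "loc J B"
  show "(A - B) x y = (if \<forall>i. i \<notin> J \<longrightarrow> x i = y i then (A - B) (restr J x) (restr J y) else 0)"
    unfolding fun_diff_def locD[OF A, of x y] locD[OF B, of x y] by auto
qed

lemma loc_add: "loc J A \<Longrightarrow> loc J B \<Longrightarrow> loc J (A + B)"
proof (rule locI)
  fix x y assume A: "loc J A" and B: "loc J B"
  show "(A + B) x y = (if \<forall>i. i \<notin> J \<longrightarrow> x i = y i then (A + B) (restr J x) (restr J y) else 0)"
    unfolding plus_fun_def locD[OF A, of x y] locD[OF B, of x y] by auto
qed

lemma loc_sum: "(\<And>k. k \<in> K \<Longrightarrow> loc J (A k)) \<Longrightarrow> loc J (\<Sum>k\<in>K. A k)"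
proof (induction K rule: infinite_finite_induct)
  case (infinite K) then show ?case by (simp add: loc_def)
next
  case empty then show ?case by (simp add: loc_def)
next
  case (insert k K)
  have e: "(\<Sum>k\<in>insert k K. A k) = A k + (\<Sum>k\<in>K. A k)" by (rule sum.insert[OF insert(1,2)])
  show ?case unfolding e by (rule loc_add) (use insert in auto)
qed

lemma loc_lincomb:
  assumes "\<And>g. g \<in> G \<Longrightarrow> loc J (U g)"
  shows "loc J (\<lambda>x y. c * (\<Sum>g\<in>G. f g * U g x y))"
proof -
  have "(\<lambda>x y. c * (\<Sum>g\<in>G. f g * U g x y)) = op_scal c (\<Sum>g\<in>G. op_scal (f g) (U g))"
    by (intro ext) (simp add: op_scal_def op_sum_apply)
  moreover have "loc J (op_scal c (\<Sum>g\<in>G. op_scal (f g) (U g)))"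
    by (intro loc_scal loc_sum) (simp add: assms loc_scal)
  ultimately show ?thesis by simp
qed

lemma loc_mult:
  fixes A B :: "('n::finite, 'a::{finite,field}) qop"
  assumes A: "loc J A" and B: "loc J B"
  shows "loc J (op_mult A B)"
  unfolding loc_def
proof (intro allI)
  fix x y :: "'n \<Rightarrow> 'a"
  let ?ag = "\<lambda>(u :: 'n \<Rightarrow> 'a) (v :: 'n \<Rightarrow> 'a). \<forall>i. i \<notin> J \<longrightarrow> u i = v i"
  have Ae: "A u v = (if ?ag u v then A (restr J u) (restr J v) else 0)" for u v
    by (rule locD[OF A])
  have Be: "B u v = (if ?ag u v then B (restr J u) (restr J v) else 0)" for u v
    by (rule locD[OF B])
  show "op_mult A B x y = (if ?ag x y then op_mult A B (restr J x) (restr J y) else 0)"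
  proof (cases "?ag x y")
    case False
    have "A x z * B z y = 0" for z
    proof (cases "?ag x z")
      case True
      hence "\<not> ?ag z y" using False by auto
      hence "B z y = 0" using Be[of z y] by auto
      then show ?thesis by simp
    next
      case False
      hence "A x z = 0" using Ae[of x z] by auto
      then show ?thesis by simp
    qed
    hence "op_mult A B x y = 0" unfolding op_mult_def by (intro sum.neutral) auto
    then show ?thesis using False by auto
  next
    case True
    define kx where "kx = x - restr J x"
    have kx: "kx \<in> VS (- J)" unfolding kx_def by (rule restr_compl_VS)
    have "op_mult A B (restr J x) (restr J y) = (\<Sum>z\<in>UNIV. A (restr J x) (z - kx) * B (z - kx) (restr J y))"
      unfolding op_mult_def
      by (rule sum.reindex_bij_witness[where i="\<lambda>z. z - kx" and j="\<lambda>z. z + kx"]) auto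
    also have "\<dots> = (\<Sum>z\<in>UNIV. A x z * B z y)"
    proof (rule sum.cong[OF refl])
      fix z
      have rz: "restr J (z - kx) = restr J z" by (rule restr_shift(2)[OF kx])
      have ag1: "?ag (restr J x) (z - kx) = ?ag x z"
        by (auto simp: kx_def restr_def)
      have ag2: "?ag (z - kx) (restr J y) = ?ag z y"
        using True by (auto simp: kx_def restr_def)
      show "A (restr J x) (z - kx) * B (z - kx) (restr J y) = A x z * B z y"
        unfolding Ae[of "restr J x" "z - kx"] Be[of "z - kx" "restr J y"] Ae[of x z] Be[of z y]
        by (simp only: ag1 ag2 rz restr_restr)
    qed
    finally show ?thesis using True unfolding op_mult_def by simp
  qed
qed

lemma dual_shorten_VS:
  fixes C :: "('n::finite \<Rightarrow> 'a::{finite,field}) set"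
  assumes C: "linear_code C"
  shows "edual (C \<inter> VS J) \<inter> VS J = restr J ` (edual C)"
proof -
  let ?P = "restr J ` (edual C)"
  have P: "linear_code ?P"
    unfolding linear_code_def
  proof (intro conjI ballI allI)
    show "(\<lambda>_. 0) \<in> ?P" using lc_0[OF lc_edual[of C]] by (force simp: restr_def zero_fun_def)
  next
    fix u v assume "u \<in> ?P" "v \<in> ?P"
    then obtain z w where "z \<in> edual C" "w \<in> edual C" "u = restr J z" "v = restr J w" by auto
    thus "(\<lambda>j. u j + v j) \<in> ?P"
      using lc_add[OF lc_edual, of z C w] by (intro image_eqI[of _ _ "z + w"]) (auto simp: restr_def)
  next
    fix c u assume "u \<in> ?P"
    then obtain z where "z \<in> edual C" "u = restr J z" by auto
    thus "(\<lambda>j. c * u j) \<in> ?P"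
      using lc_smul[OF lc_edual, of z C c] by (intro image_eqI[of _ _ "smul c z"]) (auto simp: restr_def smul_def)
  qed
  have PJ: "?P \<subseteq> VS J" by (auto simp: restr_def VS_def)
  have eq: "edual ?P \<inter> VS J = C \<inter> VS J"
  proof -
    have "v \<in> edual ?P \<longleftrightarrow> v \<in> edual (edual C)" if v: "v \<in> VS J" for v
    proof -
      have "edot v (restr J z) = edot v z" for z
        unfolding edot_def restr_def using v by (intro sum.cong refl) (auto simp: VS_def)
      thus ?thesis unfolding edual_def by auto
    qed
    thus ?thesis using double_dual[OF C] by auto
  qed
  have "edual (edual ?P \<inter> VS J) \<inter> VS J = ?P" by (rule double_dual_VS[OF P PJ])
  thus ?thesis unfolding eq .
qed

lemma psi_orth_scale:
  fixes S :: "('n::finite \<Rightarrow> 'a::{finite,field}) set"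
  assumes S: "linear_code S" and h: "\<And>c. c \<in> S \<Longrightarrow> psi (edot b c) = 1" and c: "c \<in> S"
  shows "edot b c = 0"
proof (rule ccontr)
  assume ne: "edot b c \<noteq> 0"
  obtain t where t: "psi (edot b c * t) \<noteq> 1" using psi_scale_nontriv[OF ne] by blast
  have "psi (edot b (smul t c)) = 1" by (rule h[OF lc_smul[OF S c]])
  thus False using t by (simp add: edot_smul_right mult.commute)
qed

lemma card_Err: "card (Err I :: (('n::finite \<Rightarrow> 'a::{finite,field}) \<times> ('n \<Rightarrow> 'a)) set)
    = card (UNIV :: 'a set) ^ card I * card (UNIV :: 'a set) ^ card I"
proof -
  have "Err I = (VS I :: ('n \<Rightarrow> 'a) set) \<times> VS I" by (auto simp: Err_def VS_supp)
  thus ?thesis by (simp add: card_cartesian_product card_VS)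
qed

lemma ketbra_scal: "norm c = 1 \<Longrightarrow> ketbra (\<lambda>x. c * \<phi> x) = ketbra \<phi>"
  unfolding ketbra_def using norm1_cnj[of c] by (intro ext) (simp add: mult_ac)

lemma ketbra_zero: "ketbra (\<lambda>x. 0) = (\<lambda>x y. 0)"
  unfolding ketbra_def by simp


lemma shorten_eq:
  fixes X :: "('n \<Rightarrow> 'a::zero) set"
  shows "shorten I X = X \<inter> VS I"
proof -
  have "restr I c = c" if "supp c \<subseteq> I" for c :: "'n \<Rightarrow> 'a"
    using that by (auto simp: restr_def supp_def fun_eq_iff)
  thus ?thesis unfolding shorten_def by (auto simp: VS_supp) metis
qed

lemma puncture_eq: "puncture J X = restr J ` X"
  unfolding puncture_def by auto

lemma restr_VS_id: "c \<in> VS J \<Longrightarrow> restr J c = c"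
  by (auto simp: restr_def VS_def fun_eq_iff)

lemma cond_iff:
  assumes IJ: "I \<subseteq> J" and Y: "Cy \<subseteq> edual Cx"
  shows "(shorten I (puncture J (edual Cx)) = shorten I Cy) \<longleftrightarrow>
         (\<forall>z\<in>edual Cx. restr J z \<in> VS I \<longrightarrow> restr J z \<in> (Cy :: ('n::finite \<Rightarrow> 'a::field) set))"
  unfolding shorten_eq puncture_eq
proof
  assume eq: "restr J ` edual Cx \<inter> VS I = Cy \<inter> VS I"
  show "\<forall>z\<in>edual Cx. restr J z \<in> VS I \<longrightarrow> restr J z \<in> Cy"
  proof (intro ballI impI)
    fix z assume "z \<in> edual Cx" "restr J z \<in> VS I"
    hence "restr J z \<in> restr J ` edual Cx \<inter> VS I" by auto
    thus "restr J z \<in> Cy" unfolding eq by auto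
  qed
next
  assume h: "\<forall>z\<in>edual Cx. restr J z \<in> VS I \<longrightarrow> restr J z \<in> Cy"
  show "restr J ` edual Cx \<inter> VS I = Cy \<inter> VS I"
  proof
    show "restr J ` edual Cx \<inter> VS I \<subseteq> Cy \<inter> VS I" using h by auto
  next
    show "Cy \<inter> VS I \<subseteq> restr J ` edual Cx \<inter> VS I"
    proof
      fix c assume c: "c \<in> Cy \<inter> VS I"
      hence "restr J c = c" using VS_mono[OF IJ] by (auto intro: restr_VS_id)
      moreover have "c \<in> edual Cx" using c Y by auto
      ultimately show "c \<in> restr J ` edual Cx \<inter> VS I" using c by (auto intro: image_eqI[of _ _ c])
    qed
  qed
qed

context stab
begin

lemma C1_orth: "C1 \<subseteq> edual C2"
proof
  fix c assume c: "c \<in> C1"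
  have "edot c b = 0" if b: "b \<in> C2" for b
    using orth'[OF b c] edot_comm[of c b] by simp
  thus "c \<in> edual C2" by (simp add: edual_def)
qed

lemma mu_neg:
  assumes a: "a \<in> C1" and b: "b \<in> C2"
  shows "mu (- a) (- b) = cnj (mu a b)"
proof -
  have "mu (a + - a) (b + - b) = mu a b * mu (- a) (- b)"
    by (rule mu_add[OF a b lc_minus[OF lc1 a] lc_minus[OF lc2 b]])
  hence h: "mu a b * mu (- a) (- b) = 1" using mu_00 by simp
  have "mu (- a) (- b) = (cnj (mu a b) * mu a b) * mu (- a) (- b)" using mu_cnj_mult[OF a b] by simp
  also have "\<dots> = cnj (mu a b)" using h by (simp only: mult.assoc) simp
  finally show ?thesis .
qed

definition DJ :: "'n set \<Rightarrow> (('n \<Rightarrow> 'a) \<times> ('n \<Rightarrow> 'a)) set" where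
  "DJ J = (C1 \<inter> VS J) \<times> (C2 \<inter> VS J)"

definition UJ :: "(('n \<Rightarrow> 'a) \<times> ('n \<Rightarrow> 'a)) \<Rightarrow> ('n, 'a) qop" where
  "UJ y = op_scal (cnj (mu (fst y) (snd y))) (Eop (fst y) (snd y))"

lemma chargrp_DJ: "chargrp (DJ J) UJ"
proof
  show "finite (DJ J)" by (rule finite_subset[of _ UNIV]) auto
  show "0 \<in> DJ J" using lc_0[OF lc1] lc_0[OF lc2] lc_0[OF lc_VS[of J]]
    by (simp add: DJ_def zero_prod_def)
next
  fix g h assume "g \<in> DJ J" "h \<in> DJ J"
  then show "g + h \<in> DJ J"
    by (cases g, cases h) (auto simp: DJ_def intro: lc_add[OF lc1] lc_add[OF lc2] lc_add[OF lc_VS])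
next
  fix g assume "g \<in> DJ J"
  then show "- g \<in> DJ J"
    by (cases g) (auto simp: DJ_def intro: lc_minus[OF lc1] lc_minus[OF lc2] lc_minus[OF lc_VS])
next
  fix g h assume g: "g \<in> DJ J" and h: "h \<in> DJ J"
  obtain a b where gab: "g = (a, b)" by (cases g)
  obtain c d where hcd: "h = (c, d)" by (cases h)
  have a: "a \<in> C1" and b: "b \<in> C2" and c: "c \<in> C1" and d: "d \<in> C2"
    using g h gab hcd by (auto simp: DJ_def)
  show "op_mult (UJ g) (UJ h) = UJ (g + h)"
    unfolding UJ_def gab hcd
    by (simp add: op_mult_scal_left op_mult_scal_right op_scal_scal E_mult_D[OF b c] mu_add[OF a b c d] mult.commute)
next
  fix g assume g: "g \<in> DJ J"
  obtain a b where gab: "g = (a, b)" by (cases g)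
  have a: "a \<in> C1" and b: "b \<in> C2" using g gab by (auto simp: DJ_def)
  have ab: "edot a b = 0" using orth'[OF b a] by (simp add: edot_comm)
  show "op_adj (UJ g) = UJ (- g)"
    unfolding UJ_def gab by (simp add: op_adj_scal E_adj ab op_scal_scal mu_neg[OF a b])
qed

definition syn :: "'n set \<Rightarrow> (('n \<Rightarrow> 'a) \<times> ('n \<Rightarrow> 'a)) \<Rightarrow> (('n \<Rightarrow> 'a) \<times> ('n \<Rightarrow> 'a)) \<Rightarrow> complex" where
  "syn J e = (\<lambda>y. if y \<in> DJ J then psi (edot (snd y) (fst e) - edot (snd e) (fst y)) else 0)"

lemma syn_char: "chargrp.ischar (DJ J) (syn J e)"
proof -
  interpret CG: chargrp "DJ J" UJ by (rule chargrp_DJ)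
  show ?thesis
    unfolding CG.ischar_def
  proof (intro conjI ballI)
    fix g h assume g: "g \<in> DJ J" and h: "h \<in> DJ J"
    have gh: "g + h \<in> DJ J" by (rule CG.Gadd[OF g h])
    obtain c d where gcd: "g = (c, d)" by (cases g)
    obtain c' d' where hcd: "h = (c', d')" by (cases h)
    have "edot (d + d') (fst e) - edot (snd e) (c + c')
        = (edot d (fst e) - edot (snd e) c) + (edot d' (fst e) - edot (snd e) c')"
      by (simp add: edot_add_left edot_add_right)
    thus "syn J e (g + h) = syn J e g * syn J e h"
      unfolding syn_def using g h gh gcd hcd by (simp add: psi_add)
  next
    fix g assume "g \<in> DJ J"
    then show "norm (syn J e g) = 1" unfolding syn_def by simp
  qed
qed

lemma syn_comm:
  assumes phi: "\<phi> \<in> Q" and y: "y \<in> DJ J"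
  shows "op_app (UJ y) (op_app (Eop a b) \<phi>) = (\<lambda>x. syn J (a, b) y * op_app (Eop a b) \<phi> x)"
proof -
  obtain c d where ycd: "y = (c, d)" by (cases y)
  have c: "c \<in> C1" and d: "d \<in> C2" using y ycd by (auto simp: DJ_def)
  have e1: "op_app (Eop c d) (op_app (Eop a b) \<phi>) = (\<lambda>x. psi (edot d a) * op_app (Eop (a + c) (b + d)) \<phi> x)"
    by (simp add: op_app_mult[symmetric] E_mult op_app_scal add.commute)
  have "op_app (Eop a b) (op_app (Eop c d) \<phi>) = (\<lambda>x. psi (edot b c) * op_app (Eop (a + c) (b + d)) \<phi> x)"
    by (simp add: op_app_mult[symmetric] E_mult op_app_scal)
  moreover have "op_app (Eop a b) (op_app (Eop c d) \<phi>) = (\<lambda>x. mu c d * op_app (Eop a b) \<phi> x)"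
    by (simp add: Q_E[OF phi c d] op_app_smul)
  ultimately have e2: "op_app (Eop (a + c) (b + d)) \<phi> = (\<lambda>x. cnj (psi (edot b c)) * mu c d * op_app (Eop a b) \<phi> x)"
    by (auto simp: fun_eq_iff cnj_psi psi_minus field_simps)
  have m: "cnj (mu c d) * mu c d = 1" by (rule mu_cnj_mult[OF c d])
  show ?thesis
  proof (intro ext)
    fix x
    have "op_app (UJ y) (op_app (Eop a b) \<phi>) x = cnj (mu c d) * (psi (edot d a) * (cnj (psi (edot b c)) * mu c d * op_app (Eop a b) \<phi> x))"
      unfolding UJ_def ycd by (simp add: op_app_scal e1 e2)
    also have "\<dots> = (cnj (mu c d) * mu c d) * (psi (edot d a) * cnj (psi (edot b c))) * op_app (Eop a b) \<phi> x"
      by (simp add: mult_ac)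
    also have "\<dots> = syn J (a, b) y * op_app (Eop a b) \<phi> x"
      unfolding m syn_def using y ycd by (simp add: psi_diff)
    finally show "op_app (UJ y) (op_app (Eop a b) \<phi>) x = syn J (a, b) y * op_app (Eop a b) \<phi> x" .
  qed
qed

end


lemma lc_Int: "linear_code A \<Longrightarrow> linear_code B \<Longrightarrow> linear_code (A \<inter> B)"
  unfolding linear_code_def by blast

lemma op_app_zero: "op_app X (\<lambda>x. 0) = (\<lambda>x. 0)"
  unfolding op_app_def by simp

lemma norm_one_unit': "(a::complex) \<noteq> 0 \<Longrightarrow> ((1 / a) ^ 2) ^ k * (a ^ k * a ^ k) = 1"
proof -
  assume a: "a \<noteq> 0"
  have "a ^ k * a ^ k = (a ^ 2) ^ k" by (simp add: power2_eq_square power_mult_distrib)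
  hence "((1 / a) ^ 2) ^ k * (a ^ k * a ^ k) = ((1 / a) ^ 2) ^ k * (a ^ 2) ^ k" by simp
  also have "\<dots> = ((1 / a) ^ 2 * a ^ 2) ^ k" by (rule power_mult_distrib[symmetric])
  also have "(1 / a) ^ 2 * a ^ 2 = 1" using a by (simp add: field_simps)
  finally show ?thesis by simp
qed

lemma norm_one_unit: "N > 0 \<Longrightarrow> ((1 / of_nat N) ^ 2) ^ k * of_nat (N ^ k * N ^ k) = (1::complex)"
  using norm_one_unit'[of "of_nat N" k] by simp

context stab
begin

lemma syn_key:
  assumes IJ: "I \<subseteq> J"
    and H1: "\<forall>z\<in>edual C1. restr J z \<in> VS I \<longrightarrow> restr J z \<in> C2"
    and H2: "\<forall>z\<in>edual C2. restr J z \<in> VS I \<longrightarrow> restr J z \<in> C1"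
    and e: "e \<in> Err I" and r: "r \<in> Err I" and eq: "syn J e = syn J r"
  shows "fst e - fst r \<in> C1 \<and> snd e - snd r \<in> C2"
proof -
  obtain ea eb where e': "e = (ea, eb)" by (cases e)
  obtain ra rb where r': "r = (ra, rb)" by (cases r)
  have eaI: "ea \<in> VS I" and ebI: "eb \<in> VS I" using e e' by (auto simp: Err_def VS_supp)
  have raI: "ra \<in> VS I" and rbI: "rb \<in> VS I" using r r' by (auto simp: Err_def VS_supp)
  define a where "a = ea - ra"
  define b where "b = eb - rb"
  have aI: "a \<in> VS I" unfolding a_def by (rule lc_diff[OF lc_VS eaI raI])
  have bI: "b \<in> VS I" unfolding b_def by (rule lc_diff[OF lc_VS ebI rbI])
  have aJ: "a \<in> VS J" and bJ: "b \<in> VS J" using aI bI VS_mono[OF IJ] by auto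
  have S1: "linear_code (C1 \<inter> VS J)" by (rule lc_Int[OF lc1 lc_VS])
  have S2: "linear_code (C2 \<inter> VS J)" by (rule lc_Int[OF lc2 lc_VS])
  have psi_eq: "psi u = psi v \<Longrightarrow> psi (u - v) = 1" for u v :: 'a
  proof -
    assume uv: "psi u = psi v"
    have "cnj (psi v) * psi v = 1" by (rule norm1_cnj) simp
    thus ?thesis using uv by (simp add: psi_diff mult.commute)
  qed
  have bc: "psi (edot b c) = 1" if c: "c \<in> C1 \<inter> VS J" for c
  proof -
    have cD: "(c, 0) \<in> DJ J" using c lc_0[OF lc2] lc_0[OF lc_VS[of J]] by (simp add: DJ_def)
    have "syn J e (c, 0) = syn J r (c, 0)" using eq by simp
    hence "psi (- edot eb c) = psi (- edot rb c)" using cD e' r' by (simp add: syn_def)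
    hence "cnj (psi (edot eb c)) = cnj (psi (edot rb c))" by (simp add: cnj_psi)
    hence "psi (edot eb c) = psi (edot rb c)" by simp
    from psi_eq[OF this] show ?thesis unfolding b_def by (simp add: edot_diff_left)
  qed
  have ad: "psi (edot a d) = 1" if d: "d \<in> C2 \<inter> VS J" for d
  proof -
    have dD: "(0, d) \<in> DJ J" using d lc_0[OF lc1] lc_0[OF lc_VS[of J]] by (simp add: DJ_def)
    have "syn J e (0, d) = syn J r (0, d)" using eq by simp
    hence "psi (edot d ea) = psi (edot d ra)" using dD e' r' by (simp add: syn_def)
    hence "psi (edot ea d) = psi (edot ra d)" by (simp add: edot_comm)
    from psi_eq[OF this] show ?thesis unfolding a_def by (simp add: edot_diff_left)
  qed
  have "b \<in> edual (C1 \<inter> VS J) \<inter> VS J"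
    using psi_orth_scale[OF S1 bc] bJ by (auto simp: edual_def)
  then obtain z where z: "z \<in> edual C1" "b = restr J z" unfolding dual_shorten_VS[OF lc1] by blast
  have "b \<in> C2" using H1 z bI by auto
  moreover have "a \<in> edual (C2 \<inter> VS J) \<inter> VS J"
    using psi_orth_scale[OF S2 ad] aJ by (auto simp: edual_def)
  then obtain z' where z': "z' \<in> edual C2" "a = restr J z'" unfolding dual_shorten_VS[OF lc2] by blast
  have "a \<in> C1" using H2 z' aI by auto
  ultimately show ?thesis using e' r' a_def b_def by simp
qed

lemma adjE_E_app:
  assumes phi: "\<phi> \<in> Q" and a: "a - ra \<in> C1" and b: "b - rb \<in> C2"
  shows "\<exists>c. norm c = 1 \<and> op_app (op_adj (Eop ra rb)) (op_app (Eop a b) \<phi>) = (\<lambda>x. c * \<phi> x)"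
proof -
  have "op_mult (op_adj (Eop ra rb)) (Eop a b) = op_scal (psi (edot ra rb) * psi (edot (- rb) a)) (Eop (a - ra) (b - rb))"
    by (simp add: E_adj op_mult_scal_left E_mult op_scal_scal algebra_simps)
  hence "op_app (op_adj (Eop ra rb)) (op_app (Eop a b) \<phi>) = (\<lambda>x. (psi (edot ra rb) * psi (edot (- rb) a)) * (mu (a - ra) (b - rb) * \<phi> x))"
    by (simp add: op_app_mult[symmetric] op_app_scal Q_E[OF phi a b])
  moreover have "norm (psi (edot ra rb) * psi (edot (- rb) a) * mu (a - ra) (b - rb)) = 1"
    by (simp add: norm_mult mu_norm[OF a b])
  ultimately show ?thesis by (intro exI[of _ "psi (edot ra rb) * psi (edot (- rb) a) * mu (a - ra) (b - rb)"]) (simp add: mult.assoc)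
qed

end


context stab
begin

lemma suff:
  assumes IJ: "I \<subseteq> J"
    and H1: "\<forall>z\<in>edual C1. restr J z \<in> VS I \<longrightarrow> restr J z \<in> C2"
    and H2: "\<forall>z\<in>edual C2. restr J z \<in> VS I \<longrightarrow> restr J z \<in> C1"
  shows "locally_recoverable Q I J"
proof -
  interpret CG: chargrp "DJ J" UJ by (rule chargrp_DJ)
  define Ss where "Ss = syn J ` Err I"
  define rep where "rep s = (SOME e. e \<in> Err I \<and> syn J e = s)" for s
  define V where "V s = Eop (fst (rep s)) (snd (rep s))" for s
  define A where "A s = op_mult (op_adj (V s)) (CG.Pi s)" for s
  define P where "P = (\<Sum>s\<in>Ss. CG.Pi s)"
  define Ap where "Ap = op_id - P"
  have finSs: "finite Ss" unfolding Ss_def by simp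
  define n where "n = card Ss"
  obtain h where h: "bij_betw h {0..<n} Ss" unfolding n_def using ex_bij_betw_nat_finite[OF finSs] by blast
  define Bk where "Bk k = (if k < n then A (h k) else Ap)" for k
  have rep: "rep s \<in> Err I \<and> syn J (rep s) = s" if s: "s \<in> Ss" for s
  proof -
    obtain e where "e \<in> Err I" "syn J e = s" using s unfolding Ss_def by blast
    hence "\<exists>e. e \<in> Err I \<and> syn J e = s" by blast
    thus ?thesis unfolding rep_def by (rule someI_ex)
  qed
  have ch: "CG.ischar s" if "s \<in> Ss" for s using that syn_char unfolding Ss_def by blast
  have dist: "s = t" if s: "s \<in> Ss" and t: "t \<in> Ss" and st: "\<forall>g\<in>DJ J. s g = t g" for s t
  proof -
    obtain e1 where e1: "s = syn J e1" using s unfolding Ss_def by blast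
    obtain e2 where e2: "t = syn J e2" using t unfolding Ss_def by blast
    show ?thesis
    proof
      fix y show "s y = t y" using st e1 e2 by (cases "y \<in> DJ J") (auto simp: syn_def)
    qed
  qed
  have unit: "op_mult (V s) (op_adj (V s)) = op_id" for s unfolding V_def by (rule E_unit_right)
  have locU: "loc J (UJ g)" if g: "g \<in> DJ J" for g
    unfolding UJ_def using g by (intro loc_scal loc_E) (auto simp: DJ_def)
  have locPi: "loc J (CG.Pi s)" for s unfolding CG.Pi_def by (rule loc_lincomb) (rule locU)
  have locA: "loc J (A s)" if s: "s \<in> Ss" for s
  proof -
    have "fst (rep s) \<in> VS J" "snd (rep s) \<in> VS J"
      using rep[OF s] IJ by (auto simp: Err_def VS_supp)
    thus ?thesis unfolding A_def V_def by (intro loc_mult loc_adj loc_E locPi)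
  qed
  have locAp: "loc J Ap" unfolding Ap_def P_def by (intro loc_diff loc_id loc_sum locPi)
  have hS: "k < n \<Longrightarrow> h k \<in> Ss" for k using h by (auto dest: bij_betwE)
  have LB: "local_op J (Bk k) = Bk k" for k
    unfolding Bk_def using locA[OF hS] locAp by (auto intro: loc_local_op)
  have reindex: "(\<Sum>k<n. f (h k)) = (\<Sum>s\<in>Ss. f s)" for f :: "_ \<Rightarrow> ('n, 'a) qop"
    using sum.reindex_bij_betw[OF h, of f] by (simp add: atLeast0LessThan)
  have reindex': "(\<Sum>k<n. f (h k)) = (\<Sum>s\<in>Ss. f s)" for f :: "_ \<Rightarrow> complex"
    using sum.reindex_bij_betw[OF h, of f] by (simp add: atLeast0LessThan)
  have sumB: "(\<lambda>x y. \<Sum>k<Suc n. op_mult (op_adj (local_op J (Bk k))) (local_op J (Bk k)) x y) = op_id"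
  proof -
    have "(\<lambda>x y. \<Sum>k<Suc n. op_mult (op_adj (local_op J (Bk k))) (local_op J (Bk k)) x y)
        = (\<Sum>k<Suc n. op_mult (op_adj (Bk k)) (Bk k))"
      by (intro ext) (simp add: LB op_sum_apply)
    also have "\<dots> = (\<Sum>k<n. op_mult (op_adj (A (h k))) (A (h k))) + op_mult (op_adj Ap) Ap"
      by (simp add: Bk_def)
    also have "(\<Sum>k<n. op_mult (op_adj (A (h k))) (A (h k))) = (\<Sum>s\<in>Ss. op_mult (op_adj (A s)) (A s))"
      by (rule reindex)
    also have "\<dots> + op_mult (op_adj Ap) Ap = op_id"
      unfolding A_def Ap_def P_def by (rule CG.kraus_sum[OF finSs ch dist unit])
    finally show ?thesis .
  qed
  define R where "R rho = (\<lambda>x y. \<Sum>k<Suc n. op_mult (op_mult (local_op J (Bk k)) rho) (op_adj (local_op J (Bk k))) x y)" for rho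
  have TP: "TP_op_on J R"
    unfolding TP_op_on_def using sumB R_def by blast
  have per_e: "(\<Sum>k<Suc n. ketbra (op_app (local_op J (Bk k)) (op_app (Eop (fst e) (snd e)) \<phi>)) x y) = ketbra \<phi> x y"
    if e: "e \<in> Err I" and phi: "\<phi> \<in> Q" for e \<phi> x y
  proof -
    obtain a b where eab: "e = (a, b)" by (cases e)
    define w where "w = op_app (Eop a b) \<phi>"
    have se: "syn J e \<in> Ss" unfolding Ss_def using e by blast
    have Uw: "op_app (UJ g) w = (\<lambda>x. syn J e g * w x)" if "g \<in> DJ J" for g
      unfolding w_def eab by (rule syn_comm[OF phi that])
    have Piw: "op_app (CG.Pi s) w = (if s = syn J e then w else (\<lambda>x. 0))" if s: "s \<in> Ss" for s
    proof -
      have "op_app (CG.Pi s) w = (if \<forall>g\<in>DJ J. s g = syn J e g then w else (\<lambda>x. 0))"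
        by (rule CG.Pi_app[OF ch[OF s] syn_char Uw])
      moreover have "(\<forall>g\<in>DJ J. s g = syn J e g) = (s = syn J e)"
        using dist[OF s se] by auto
      ultimately show ?thesis by simp
    qed
    have Aw: "op_app (A s) w = (if s = syn J e then op_app (op_adj (V s)) w else (\<lambda>x. 0))" if s: "s \<in> Ss" for s
      unfolding A_def op_app_mult Piw[OF s] by (simp add: op_app_zero)
    have Apw: "op_app Ap w = (\<lambda>x. 0)"
    proof -
      have "op_app P w = (\<lambda>x. \<Sum>s\<in>Ss. op_app (CG.Pi s) w x)" unfolding P_def by (rule op_app_sum)
      also have "\<dots> = (\<lambda>x. \<Sum>s\<in>Ss. if s = syn J e then w x else 0)"
        by (intro ext sum.cong refl) (simp add: Piw)
      also have "\<dots> = w" using se finSs by (simp add: sum.delta')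
      finally show ?thesis unfolding Ap_def by (simp add: op_app_diff)
    qed
    have "(\<Sum>k<Suc n. ketbra (op_app (local_op J (Bk k)) w) x y)
        = (\<Sum>k<n. ketbra (op_app (A (h k)) w) x y) + ketbra (op_app Ap w) x y"
      unfolding LB by (simp add: Bk_def)
    also have "(\<Sum>k<n. ketbra (op_app (A (h k)) w) x y) = (\<Sum>s\<in>Ss. ketbra (op_app (A s) w) x y)"
      by (rule reindex')
    also have "\<dots> = (\<Sum>s\<in>Ss. if s = syn J e then ketbra (op_app (op_adj (V s)) w) x y else 0)"
      by (intro sum.cong refl) (simp add: Aw ketbra_def)
    also have "\<dots> = ketbra (op_app (op_adj (V (syn J e))) w) x y"
      using se finSs by (simp add: sum.delta')
    also have "ketbra (op_app Ap w) x y = 0" unfolding Apw by (simp add: ketbra_def)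
    finally have S: "(\<Sum>k<Suc n. ketbra (op_app (local_op J (Bk k)) w) x y) = ketbra (op_app (op_adj (V (syn J e))) w) x y"
      by simp
    define r where "r = rep (syn J e)"
    have r: "r \<in> Err I" "syn J r = syn J e" using rep[OF se] unfolding r_def by auto
    have key: "fst e - fst r \<in> C1 \<and> snd e - snd r \<in> C2"
      by (rule syn_key[OF IJ H1 H2 e r(1) r(2)[symmetric]])
    obtain c where c: "norm c = 1" "op_app (op_adj (Eop (fst r) (snd r))) (op_app (Eop a b) \<phi>) = (\<lambda>x. c * \<phi> x)"
      using adjE_E_app[OF phi, of a "fst r" b "snd r"] key eab by auto
    have "ketbra (op_app (op_adj (V (syn J e))) w) x y = ketbra \<phi> x y"
      unfolding V_def r_def[symmetric] w_def c(2) ketbra_scal[OF c(1)] ..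
    with S show ?thesis unfolding w_def eab by simp
  qed
  have rec: "R (Gamma_I I (ketbra \<phi>)) = ketbra \<phi>" if phi: "\<phi> \<in> Q" for \<phi>
  proof (intro ext)
    fix x y
    let ?t = "((1 / of_nat (card (UNIV :: 'a set))) ^ 2) ^ card I :: complex"
    have "R (Gamma_I I (ketbra \<phi>)) x y = (\<Sum>k<Suc n. \<Sum>e\<in>Err I.
        ?t * ketbra (op_app (local_op J (Bk k)) (op_app (Eop (fst e) (snd e)) \<phi>)) x y)"
      using R_Gamma[where R=R and m="Suc n" and L="\<lambda>k. local_op J (Bk k)" and I=I and \<phi>=\<phi>] R_def by simp
    also have "\<dots> = (\<Sum>e\<in>Err I. ?t * (\<Sum>k<Suc n. ketbra (op_app (local_op J (Bk k)) (op_app (Eop (fst e) (snd e)) \<phi>)) x y))"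
      by (subst sum.swap) (simp only: sum_distrib_left)
    also have "\<dots> = (\<Sum>e\<in>(Err I :: (('n \<Rightarrow> 'a) \<times> ('n \<Rightarrow> 'a)) set). ?t * ketbra \<phi> x y)"
    proof (rule sum.cong[OF refl])
      fix e :: "('n \<Rightarrow> 'a) \<times> ('n \<Rightarrow> 'a)" assume "e \<in> Err I"
      show "?t * (\<Sum>k<Suc n. ketbra (op_app (local_op J (Bk k)) (op_app (Eop (fst e) (snd e)) \<phi>)) x y) = ?t * ketbra \<phi> x y"
        using per_e[OF \<open>e \<in> Err I\<close> phi] by simp
    qed
    also have "\<dots> = (?t * of_nat (card (Err I :: (('n \<Rightarrow> 'a) \<times> ('n \<Rightarrow> 'a)) set))) * ketbra \<phi> x y"
      by (simp add: mult_ac)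
    also have "?t * of_nat (card (Err I :: (('n \<Rightarrow> 'a) \<times> ('n \<Rightarrow> 'a)) set)) = 1"
      unfolding card_Err by (rule norm_one_unit) (rule finite_UNIV_card_ge_0, simp)
    finally show "R (Gamma_I I (ketbra \<phi>)) x y = ketbra \<phi> x y" by simp
  qed
  show ?thesis unfolding locally_recoverable_def using TP rec by blast
qed

theorem main:
  assumes "I \<subset> J"
  shows "locally_recoverable Q I J \<longleftrightarrow>
           (shorten I (puncture J (edual C1)) = shorten I C2 \<and>
            shorten I (puncture J (edual C2)) = shorten I C1)"
proof -
  have IJ: "I \<subseteq> J" using assms by auto
  note c1 = cond_iff[OF IJ orth]
  note c2 = cond_iff[OF IJ C1_orth]
  show ?thesis
  proof
    assume "locally_recoverable Q I J"
    then obtain R where TP: "TP_op_on J R" and rec: "\<forall>\<phi>\<in>Q. R (Gamma_I I (ketbra \<phi>)) = ketbra \<phi>"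
      unfolding locally_recoverable_def by blast
    show "shorten I (puncture J (edual C1)) = shorten I C2 \<and> shorten I (puncture J (edual C2)) = shorten I C1"
      unfolding c1 c2 using nec_Z[OF TP rec IJ] nec_X[OF TP rec IJ] by blast
  next
    assume "shorten I (puncture J (edual C1)) = shorten I C2 \<and> shorten I (puncture J (edual C2)) = shorten I C1"
    hence "\<forall>z\<in>edual C1. restr J z \<in> VS I \<longrightarrow> restr J z \<in> C2"
      and "\<forall>z\<in>edual C2. restr J z \<in> VS I \<longrightarrow> restr J z \<in> C1"
      unfolding c1 c2 by auto
    thus "locally_recoverable Q I J" by (rule suff[OF IJ])
  qed
qed

end

theorem proposition27:
  fixes C1 C2 :: "('n::finite \<Rightarrow> 'a::{finite,field}) set"
    and I J :: "'n set"
    and lam :: "('n, 'a) qop \<Rightarrow> complex"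
  assumes "linear_code C1" and "linear_code C2"
    and "C2 \<subseteq> edual C1"
    and "stab_char (prod_code C1 C2) lam"
    and "I \<noteq> {}" and "I \<subset> J"
  shows "locally_recoverable (stab_code (prod_code C1 C2) lam) I J \<longleftrightarrow>
           (shorten I (puncture J (edual C1)) = shorten I C2 \<and>
            shorten I (puncture J (edual C2)) = shorten I C1)"
proof -
  interpret stab C1 C2 lam using assms(1-4) by unfold_locales
  show ?thesis by (rule main[OF assms(6)])
qed


end
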